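(* Let $X$ have the isotropic Matérn covariance, and assign independent priors $\beta\sim N(0,a_0I_p)$, $\theta\sim\mathrm{IG}(a_1,b_1)$, $\tau\sim\mathrm{IG}(a_2,b_2)$, $\alpha\sim\mathrm{IGauss}(\mu,\lambda)$ with positive hyperparameters $a_0,a_1,b_1,a_2,b_2,\mu,\lambda$ satisfying $a_1>2(3p+6)/\rho_{21}$ and $a_2>2(3p+6)/\rho_{22}$. Then Assumption A3 (stated in the context) holds for any true parameter $(\theta_0,\alpha_0,\tau_0,\beta_0)\in\mathbb R_+^3\times\mathbb R^p$, and $\Pi(\mathcal E_n^c)\le n^{-(3p+6)}$ for all sufficiently large $n$ (i.e. Assumption A5 with $\kappa=1$ holds for $\mathcal E_n$).
   Context: Model: $Y(\mathbf s)=\mathrm f(\mathbf s)^T\beta+X(\mathbf s)+\varepsilon(\mathbf s)$ on $[0,1]^d$, $\beta\in\mathbb R^p$, $\varepsilon$ white noise with variance $\tau$, $X$ zero-mean Gaussian with isotropic Matérn covariance $\theta K_{\alpha,\nu}(\mathbf s-\mathbf t)$, $K_{\alpha,\nu}(x)=\frac{2^{1-\nu}}{\Gamma(\nu)}(\|x\|/\alpha)^\nu\mathcal K_\nu(\alpha\|x\|)$, $\nu>0$ known. $\mathrm{IG}(a,b)$ is the inverse gamma law with density $\frac{b^a}{\Gamma(a)}x^{-a-1}e^{-b/x}$, $x>0$; $\mathrm{IGauss}(\mu,\lambda)$ is the inverse Gaussian law with density $(\lambda/(2\pi x^3))^{1/2}\exp\{-\lambda(x-\mu)^2/(2\mu^2x)\}$,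 $x>0$. $\Pi$ is the prior measure. Assumption A3: the prior does not depend on $n$, has a proper density $\pi$ continuous in a neighborhood of $(\theta_0,\alpha_0,\tau_0,\beta_0)$ with $\pi(\theta_0,\alpha_0,\tau_0,\beta_0)>0$, and $\int_0^\infty\tau^{-n/2}\pi(\tau)d\tau<\infty$ for every $n\in\mathbb Z_+$. $\mathcal E_n=\{(\theta,\alpha,\tau,\beta)\in\mathbb R_+^3\times\mathbb R^p:\|\beta\|^2/\theta\le n^{\rho_1},\ \tau/\theta\in[n^{-\rho_{21}},n^{\rho_{22}}],\ \alpha\in[n^{-\rho_{31}},n^{\rho_{32}}]\}$, where for some $\gamma\in(\max\{1-d/(4\nu),0\},1)$ the constants satisfy $0<\rho_1<1-\gamma$, $0<\rho_{21}<2\nu(1-\gamma)/d$, $0<\rho_{22}<1/2-2(1-\gamma)\nu/d$, $\rho_{31}>0$, $0<\rho_{32}<(1-\gamma)/d$. *)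

theory Defs
  imports "HOL-Probability.Probability"
begin

type_synonym 'p param = "real \<times> real \<times> real \<times> (real ^ 'p)"
  (* (theta, alpha, tau, beta) *)

definition ig_density :: "real \<Rightarrow> real \<Rightarrow> real \<Rightarrow> real" where
  "ig_density a b x = (if x > 0 then b powr a / Gamma a * x powr (-a - 1) * exp (- b / x) else 0)"

definition igauss_density :: "real \<Rightarrow> real \<Rightarrow> real \<Rightarrow> real" where
  "igauss_density mu lam x = (if x > 0 then
      sqrt (lam / (2 * pi * x ^ 3)) * exp (- lam * (x - mu)^2 / (2 * mu^2 * x)) else 0)"

definition prior_density ::
  "real \<Rightarrow> real \<Rightarrow> real \<Rightarrow> real \<Rightarrow> real \<Rightarrow> real \<Rightarrow> real \<Rightarrow> ('p::finite) param \<Rightarrow> real" where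
  "prior_density a0 a1 b1 a2 b2 mu lam = (\<lambda>(\<theta>, \<alpha>, \<tau>, \<beta>).
      ig_density a1 b1 \<theta> * igauss_density mu lam \<alpha> * ig_density a2 b2 \<tau> *
      (\<Prod>i\<in>UNIV. normal_density 0 (sqrt a0) (\<beta> $ i)))"

text \<open>Assumption A3 for a prior density pd on R_+^3 x R^p and true parameter x0.
  (Independence of n is automatic: pd does not depend on n.)\<close>
definition assumption_A3 :: "(('p::finite) param \<Rightarrow> real) \<Rightarrow> 'p param \<Rightarrow> bool" where
  "assumption_A3 pd x0 \<longleftrightarrow>
     pd \<in> borel_measurable lborel \<and> (\<forall>x. pd x \<ge> 0) \<and>
     (\<integral>\<^sup>+ x. ennreal (pd x) \<partial>lborel) = 1 \<and>
     (\<exists>e>0. continuous_on (ball x0 e) pd) \<and>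
     pd x0 > 0 \<and>
     (\<forall>n::nat. n > 0 \<longrightarrow>
        (\<integral>\<^sup>+ x. ennreal ((fst (snd (snd x))) powr (- (real n / 2)) * pd x) \<partial>lborel) < \<infinity>)"

definition sieve_E :: "real \<Rightarrow> real \<Rightarrow> real \<Rightarrow> real \<Rightarrow> real \<Rightarrow> nat \<Rightarrow> ('p::finite) param set" where
  "sieve_E \<rho>1 \<rho>21 \<rho>22 \<rho>31 \<rho>32 n = {(\<theta>, \<alpha>, \<tau>, \<beta>).
      \<theta> > 0 \<and> \<alpha> > 0 \<and> \<tau> > 0 \<and>
      (norm \<beta>)^2 / \<theta> \<le> real n powr \<rho>1 \<and>
      real n powr (- \<rho>21) \<le> \<tau> / \<theta> \<and> \<tau> / \<theta> \<le> real n powr \<rho>22 \<and>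
      real n powr (- \<rho>31) \<le> \<alpha> \<and> \<alpha> \<le> real n powr \<rho>32}"

end

theory Submission
  imports Defs "HOL-Real_Asymp.Real_Asymp"
begin

lemma nn_prod2:
  fixes f :: "'a::euclidean_space \<Rightarrow> ennreal" and g :: "'b::euclidean_space \<Rightarrow> ennreal"
  assumes [measurable]: "f \<in> borel_measurable borel" "g \<in> borel_measurable borel"
  shows "(\<integral>\<^sup>+x. f (fst x) * g (snd x) \<partial>lborel) = (\<integral>\<^sup>+x. f x \<partial>lborel) * (\<integral>\<^sup>+x. g x \<partial>lborel)"
proof -
  have "(\<integral>\<^sup>+x. f (fst x) * g (snd x) \<partial>lborel) = (\<integral>\<^sup>+x. f (fst x) * g (snd x) \<partial>(lborel \<Otimes>\<^sub>M lborel))"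
    by (simp add: lborel_prod)
  also have "\<dots> = (\<integral>\<^sup>+x. \<integral>\<^sup>+y. f x * g y \<partial>lborel \<partial>lborel)"
    by (subst lborel.nn_integral_fst[symmetric]) auto
  also have "\<dots> = (\<integral>\<^sup>+x. f x * (\<integral>\<^sup>+y. g y \<partial>lborel) \<partial>lborel)"
    by (simp add: nn_integral_cmult)
  also have "\<dots> = (\<integral>\<^sup>+x. f x \<partial>lborel) * (\<integral>\<^sup>+x. g x \<partial>lborel)"
    by (simp add: nn_integral_multc)
  finally show ?thesis .
qed

lemma nn_vec_prod:
  fixes h :: "real \<Rightarrow> real"
  assumes [measurable]: "h \<in> borel_measurable borel" and nn: "\<And>x. h x \<ge> 0"
  shows "(\<integral>\<^sup>+x. ennreal (\<Prod>i\<in>UNIV. h ((x::real^'n::finite) $ i)) \<partial>lborel) = (\<integral>\<^sup>+x. ennreal (h x) \<partial>lborel) ^ CARD('n)"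
proof -
  have "(\<lambda>x::real^'n. ennreal (\<Prod>i\<in>UNIV. h (x $ i))) = (\<lambda>x. \<Prod>b\<in>Basis. ennreal (h (x \<bullet> b)))"
  proof
    fix x :: "real^'n"
    have "(\<Prod>b\<in>Basis. ennreal (h (x \<bullet> b))) = (\<Prod>b\<in>(\<lambda>i. axis i 1) ` UNIV. ennreal (h (x \<bullet> b)))"
      by (rule prod.cong) (auto simp: Basis_vec_def)
    also have "\<dots> = (\<Prod>i\<in>UNIV. ennreal (h (x \<bullet> axis i 1)))"
      by (subst prod.reindex) (auto simp: inj_on_def axis_eq_axis)
    also have "\<dots> = ennreal (\<Prod>i\<in>UNIV. h (x $ i))"
      by (simp add: cart_eq_inner_axis prod_ennreal nn)
    finally show "ennreal (\<Prod>i\<in>UNIV. h (x $ i)) = (\<Prod>b\<in>Basis. ennreal (h (x \<bullet> b)))" by simp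
  qed
  then have "(\<integral>\<^sup>+x. ennreal (\<Prod>i\<in>UNIV. h ((x::real^'n::finite) $ i)) \<partial>lborel) = (\<integral>\<^sup>+(x::real^'n). (\<Prod>b\<in>Basis. ennreal (h (x \<bullet> b))) \<partial>lborel)"
    by (simp only:)
  also have "\<dots> = (\<Prod>b\<in>(Basis::(real^'n) set). (\<integral>\<^sup>+x. ennreal (h x) \<partial>lborel))"
    by (rule nn_integral_lborel_prod) auto
  also have "\<dots> = (\<integral>\<^sup>+x. ennreal (h x) \<partial>lborel) ^ CARD('n)"
    by simp
  finally show ?thesis .
qed

lemma gamma_kernel_has_integral:
  fixes r b :: real
  assumes r: "r > 0" and b: "b > 0"
  shows "((\<lambda>x. x powr (-r-1) * exp (-b/x)) has_integral (b powr (-r) * Gamma r)) {0<..}"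
proof -
  have G0: "((\<lambda>t. t powr (r-1)/exp t) has_integral Gamma r) {0..}"
    using Gamma_integral_real[OF r] .
  have G: "((\<lambda>t. t powr (r-1)/exp t) has_integral Gamma r) {0<..}"
  proof -
    have "((\<lambda>t. t powr (r-1)/exp t) has_integral Gamma r) {0..} \<longleftrightarrow> ((\<lambda>t. t powr (r-1)/exp t) has_integral Gamma r) {0<..}"
      by (rule has_integral_spike_set_eq) (auto intro: negligible_subset[of "{0}"])
    with G0 show ?thesis by simp
  qed
  define h where "h y = \<bar>- b / y\<^sup>2\<bar> * ((b/y) powr (-r-1) * exp (-b/(b/y)))" for y :: real
  have h_eq: "h y = b powr (-r) * (y powr (r-1)/exp y)" if "y > 0" for y
  proof -
    have yi: "y powr (-r-1) = inverse (y powr (r+1))"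
      by (subst powr_minus[symmetric]) simp
    have "(b/y) powr (-r-1) = b powr (-r-1) * y powr (r+1)"
      using that b by (simp add: powr_divide yi divide_simps)
    moreover have "y powr (r+1) = y powr (r-1) * y\<^sup>2"
      using that by (simp add: powr_add power2_eq_square powr_diff)
    moreover have "b powr (-r-1) = b powr (-r) / b"
      using b by (simp add: powr_diff powr_minus)
    ultimately show ?thesis
      unfolding h_def using that b by (simp add: field_simps exp_minus)
  qed
  have hi: "(h has_integral (b powr (-r) * Gamma r)) {0<..}"
    using has_integral_mult_right[OF G, of "b powr (-r)"]
    by (rule has_integral_eq[rotated]) (simp add: h_eq)
  have habs: "h absolutely_integrable_on {0<..}"
    using hi unfolding h_def by (intro nonnegative_absolutely_integrable_1) (auto simp: has_integral_integrable)
  have img: "(\<lambda>y. b / y) ` {0<..} = {0<..}"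
  proof safe
    fix x :: real assume "x > 0"
    then show "x \<in> (\<lambda>y. b / y) ` {0<..}" using b by (intro image_eqI[of _ _ "b/x"]) auto
  qed (use b in auto)
  have "(\<lambda>x. \<bar>- b / x\<^sup>2\<bar> * ((b/x) powr (-r-1) * exp (-b/(b/x)))) absolutely_integrable_on {0<..} \<and>
        integral {0<..} (\<lambda>x. \<bar>- b / x\<^sup>2\<bar> * ((b/x) powr (-r-1) * exp (-b/(b/x)))) = b powr (-r) * Gamma r
     \<longleftrightarrow> (\<lambda>x. x powr (-r-1) * exp (-b/x)) absolutely_integrable_on ((\<lambda>y. b / y) ` {0<..}) \<and>
         integral ((\<lambda>y. b / y) ` {0<..}) (\<lambda>x. x powr (-r-1) * exp (-b/x)) = b powr (-r) * Gamma r"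
    by (rule has_absolute_integral_change_of_variables_1')
       (use b in \<open>auto intro!: derivative_eq_intros simp: inj_on_def power2_eq_square field_simps\<close>)
  moreover have "(\<lambda>x. \<bar>- b / x\<^sup>2\<bar> * ((b/x) powr (-r-1) * exp (-b/(b/x)))) absolutely_integrable_on {0<..} \<and>
        integral {0<..} (\<lambda>x. \<bar>- b / x\<^sup>2\<bar> * ((b/x) powr (-r-1) * exp (-b/(b/x)))) = b powr (-r) * Gamma r"
    using habs hi unfolding h_def by (auto dest: integral_unique)
  ultimately show ?thesis
    unfolding img using set_lebesgue_integral_eq_integral(1) 
    by (metis absolutely_integrable_on_def has_integral_integral)
qed

lemma gamma_kernel_nn:
  fixes r b :: real
  assumes r: "r > 0" and b: "b > 0"
  shows "(\<integral>\<^sup>+x. ennreal (indicator {0<..} x * (x powr (-r-1) * exp (-b/x))) \<partial>lborel) = ennreal (b powr (-r) * Gamma r)"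
  by (rule nn_integral_has_integral_lebesgue[OF _ gamma_kernel_has_integral[OF r b]]) auto

lemma ig_measurable[measurable]: "ig_density a b \<in> borel_measurable borel"
  unfolding ig_density_def[abs_def] by measurable

lemma igauss_measurable[measurable]: "igauss_density m l \<in> borel_measurable borel"
  unfolding igauss_density_def[abs_def] by measurable

lemma ig_nonneg: "a > 0 \<Longrightarrow> b > 0 \<Longrightarrow> ig_density a b x \<ge> 0"
  by (auto simp: ig_density_def intro!: mult_nonneg_nonneg divide_nonneg_pos Gamma_real_pos)

lemma ig_pos: "a > 0 \<Longrightarrow> b > 0 \<Longrightarrow> x > 0 \<Longrightarrow> ig_density a b x > 0"
  by (auto simp: ig_density_def intro!: mult_pos_pos divide_pos_pos Gamma_real_pos)

lemma igauss_nonneg: "l > 0 \<Longrightarrow> igauss_density m l x \<ge> 0"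
  by (auto simp: igauss_density_def)

lemma igauss_pos: "m > 0 \<Longrightarrow> l > 0 \<Longrightarrow> x > 0 \<Longrightarrow> igauss_density m l x > 0"
  by (auto simp: igauss_density_def)

lemma ig_moment:
  fixes a b q :: real
  assumes a: "a > 0" and b: "b > 0" and q: "q < a"
  shows "(\<integral>\<^sup>+x. ennreal (x powr q * ig_density a b x) \<partial>lborel) = ennreal (b powr a / Gamma a * (b powr (q - a) * Gamma (a - q)))"
proof -
  have "(\<integral>\<^sup>+x. ennreal (x powr q * ig_density a b x) \<partial>lborel) =
        (\<integral>\<^sup>+x. ennreal (b powr a / Gamma a) * ennreal (indicator {0<..} x * (x powr (-(a-q)-1) * exp (-b/x))) \<partial>lborel)"
  proof (rule nn_integral_cong)
    fix x :: real
    show "ennreal (x powr q * ig_density a b x) = ennreal (b powr a / Gamma a) * ennreal (indicator {0<..} x * (x powr (-(a-q)-1) * exp (-b/x)))"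
    proof (cases "x > 0")
      case True
      have "x powr q * x powr (- a - 1) = x powr (-(a-q)-1)"
        using True by (subst powr_add[symmetric]) (simp add: algebra_simps)
      then show ?thesis using True a b
        by (simp add: ig_density_def ennreal_mult'[symmetric] Gamma_real_pos less_imp_le)
    qed (simp add: ig_density_def)
  qed
  also have "\<dots> = ennreal (b powr a / Gamma a) * ennreal (b powr (-(a-q)) * Gamma (a-q))"
    using gamma_kernel_nn[of "a-q" b] a b q by (subst nn_integral_cmult) auto
  also have "\<dots> = ennreal (b powr a / Gamma a * (b powr (q - a) * Gamma (a - q)))"
    using a b q by (simp add: ennreal_mult'[symmetric] Gamma_real_pos less_imp_le)
  finally show ?thesis .
qed

lemma ig_integral_1:
  fixes a b :: real
  assumes a: "a > 0" and b: "b > 0"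
  shows "(\<integral>\<^sup>+x. ennreal (ig_density a b x) \<partial>lborel) = 1"
proof -
  have "(\<integral>\<^sup>+x. ennreal (ig_density a b x) \<partial>lborel) = (\<integral>\<^sup>+x. ennreal (x powr 0 * ig_density a b x) \<partial>lborel)"
    by (rule nn_integral_cong) (simp add: ig_density_def)
  also have "\<dots> = 1"
  proof -
    have g: "Gamma a \<noteq> 0" using Gamma_real_pos[OF a] by simp
    show ?thesis using a b g by (subst ig_moment) (auto simp: powr_minus field_simps)
  qed
  finally show ?thesis .
qed

lemma normal_integral_1:
  assumes "s > 0"
  shows "(\<integral>\<^sup>+x. ennreal (normal_density m s x) \<partial>lborel) = 1"
  using integral_normal_density[OF assms] integrable_normal_density[OF assms]
  by (subst nn_integral_eq_integral) auto

lemma std_normal_half: "(std_normal_density has_integral (1/2)) {0<..}"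
proof -
  let ?phi = "std_normal_density"
  have m[measurable]: "?phi \<in> borel_measurable borel" by simp
  have tot: "(\<integral>\<^sup>+x. ennreal (?phi x) \<partial>lborel) = 1"
    by (rule normal_integral_1) simp
  define A where "A = (\<integral>\<^sup>+x. ennreal (?phi x) * indicator {0<..} x \<partial>lborel)"
  have split: "(\<integral>\<^sup>+x. ennreal (?phi x) \<partial>lborel) = A + (\<integral>\<^sup>+x. ennreal (?phi x) * indicator {..0} x \<partial>lborel)"
    unfolding A_def
    by (subst nn_integral_add[symmetric]) (auto intro!: nn_integral_cong split: split_indicator)
  have refl: "(\<integral>\<^sup>+x. ennreal (?phi x) * indicator {..0} x \<partial>lborel) = (\<integral>\<^sup>+x. ennreal (?phi x) * indicator {0..} x \<partial>lborel)"
    using nn_integral_real_affine[of "\<lambda>x. ennreal (?phi x) * indicator {..0} x" "-1" 0]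
    by (simp add: normal_density_def indicator_def)
  have ae: "(\<integral>\<^sup>+x. ennreal (?phi x) * indicator {0..} x \<partial>lborel) = A"
    unfolding A_def
    by (rule nn_integral_cong_AE) (use AE_lborel_singleton[of 0] in \<open>auto split: split_indicator\<close>)
  have "A + A = 1" using tot split refl ae by simp
  then have A: "A = ennreal (1/2)"
  proof (cases A)
    case (real a)
    assume "A + A = 1"
    then have "ennreal (a + a) = 1" using real by (simp add: ennreal_plus[symmetric])
    then have "a + a = 1" using real by (simp add: ennreal_eq_1)
    then have a2: "a = 1/2" by simp
    show ?thesis by (simp only: real a2)
  qed simp
  have "((\<lambda>x. indicator {0<..} x * ?phi x) has_integral (1/2)) UNIV"
    by (rule nn_integral_has_integral) (use A in \<open>auto simp: A_def mult.commute ennreal_mult'' ennreal_indicator\<close>)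
  moreover have "(\<lambda>x. indicator {0<..} x * ?phi x) = (\<lambda>x. if x \<in> {0<..} then ?phi x else 0)"
    by (auto simp: indicator_def)
  ultimately show ?thesis
    by (simp only: has_integral_restrict_UNIV)
qed

lemma igauss_alt:
  assumes m: "m > 0" and l: "l > 0" and y: "y > 0"
  shows "igauss_density m l y = sqrt l / sqrt (2*pi) / (y * sqrt y) * exp (- l * (y - m)^2 / (2 * m^2 * y))"
proof -
  have "sqrt (y^3) = y * sqrt y"
    using y by (simp add: power3_eq_cube real_sqrt_mult)
  then have "sqrt (l / (2 * pi * y ^ 3)) = sqrt l / sqrt (2*pi) / (y * sqrt y)"
    using y l by (simp add: real_sqrt_divide real_sqrt_mult field_simps)
  then show ?thesis using y by (simp add: igauss_density_def)
qed

definition uu :: "real \<Rightarrow> real \<Rightarrow> real \<Rightarrow> real" where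
  "uu m l y = sqrt l * (sqrt y / m - 1 / sqrt y)"

definition uu' :: "real \<Rightarrow> real \<Rightarrow> real \<Rightarrow> real" where
  "uu' m l y = sqrt l * (1 / (2 * m * sqrt y) + 1 / (2 * y * sqrt y))"

lemma uu_sq:
  assumes m: "m > 0" and l: "l > 0" and y: "y > 0"
  shows "(uu m l y)^2 / 2 = l * (y - m)^2 / (2 * m^2 * y)"
proof -
  define s where "s = sqrt y"
  have s: "s > 0" "y = s^2" using y by (auto simp: s_def)
  have c: "(sqrt l)^2 = l" using l by simp
  have "(uu m l y)^2 = (sqrt l)^2 * (s / m - 1 / s)^2"
    by (simp add: uu_def s_def power_mult_distrib)
  also have "\<dots> = l * (s^2 - m)^2 / (m^2 * s^2)"
    using s m c by (simp add: field_simps power2_eq_square)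
  finally show ?thesis using s by (simp add: field_simps)
qed

lemma uu_deriv:
  assumes m: "m > 0" and y: "y > 0"
  shows "(uu m l has_field_derivative uu' m l y) (at y within S)"
proof -
  have sy: "sqrt y > 0" using y by simp
  have d1: "(sqrt has_real_derivative inverse (sqrt y) / 2) (at y)"
    using DERIV_real_sqrt[OF y] .
  have d2: "((\<lambda>z. inverse (sqrt z)) has_real_derivative - (inverse (sqrt y) / 2 * inverse (sqrt y ^ Suc (Suc 0)))) (at y)"
    by (rule DERIV_inverse_fun[OF d1]) (use sy in simp)
  have d3: "((\<lambda>z. sqrt l * (sqrt z / m - inverse (sqrt z))) has_real_derivative
      sqrt l * (inverse (sqrt y) / 2 / m - (- (inverse (sqrt y) / 2 * inverse (sqrt y ^ Suc (Suc 0)))))) (at y)"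
    by (intro DERIV_cmult DERIV_diff DERIV_cdivide d1 d2)
  have eq: "sqrt l * (inverse (sqrt y) / 2 / m - (- (inverse (sqrt y) / 2 * inverse (sqrt y ^ Suc (Suc 0))))) = uu' m l y"
  proof -
    have "sqrt y ^ Suc (Suc 0) = y" using y by simp
    then show ?thesis unfolding uu'_def using sy m by (simp add: field_simps)
  qed
  have "uu m l = (\<lambda>z. sqrt l * (sqrt z / m - inverse (sqrt z)))"
    by (simp add: uu_def[abs_def] divide_inverse)
  then show ?thesis
    using d3 eq by (auto intro: has_field_derivative_at_within)
qed

lemma phi_uu:
  assumes m: "m > 0" and l: "l > 0" and y: "y > 0"
  shows "uu' m l y * std_normal_density (uu m l y) = (igauss_density m l y + (y / m) * igauss_density m l y) / 2"
proof -
  have e: "exp (- ((uu m l y)^2) / 2) = exp (- l * (y - m)^2 / (2 * m^2 * y))"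
  proof -
    have "- ((uu m l y)^2) / 2 = - l * (y - m)^2 / (2 * m^2 * y)"
      using uu_sq[OF m l y] by (metis minus_divide_left mult_minus_left)
    then show ?thesis by simp
  qed
  define E where "E = exp (- l * (y - m)^2 / (2 * m^2 * y))"
  define s where "s = sqrt y"
  have s: "s > 0" "y = s * s" using y by (auto simp: s_def)
  have key: "\<And>L P E. P > 0 \<Longrightarrow> L * (1 / (2 * m * s) + 1 / (2 * (s * s) * s)) * (1 / P * E) = (L / P / ((s * s) * s) * E + ((s * s) / m) * (L / P / ((s * s) * s) * E)) / 2"
    using m s(1) by (simp add: field_simps)
  have "uu' m l y * std_normal_density (uu m l y) = sqrt l * (1 / (2 * m * s) + 1 / (2 * (s * s) * s)) * (1 / sqrt (2 * pi) * E)"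
    unfolding std_normal_density_def e E_def[symmetric] uu'_def s_def[symmetric]
    by (simp only: s(2)[symmetric])
  also have "\<dots> = (sqrt l / sqrt (2 * pi) / ((s * s) * s) * E + ((s * s) / m) * (sqrt l / sqrt (2 * pi) / ((s * s) * s) * E)) / 2"
    by (rule key) simp
  also have "\<dots> = (igauss_density m l y + (y / m) * igauss_density m l y) / 2"
    unfolding igauss_alt[OF m l y] E_def[symmetric] s_def[symmetric]
    by (simp only: s(2)[symmetric])
  finally show ?thesis .
qed

lemma igauss_reflect:
  assumes m: "m > 0" and l: "l > 0" and y: "y > 0"
  shows "\<bar>- (m^2) / y^2\<bar> * igauss_density m l (m^2 / y) = (y / m) * igauss_density m l y"
proof -
  have y2: "m^2 / y > 0" using m y by simp
  define s where "s = sqrt y"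
  have s: "s > 0" "y = s * s" using y by (auto simp: s_def)
  have sq: "sqrt (m^2 / y) = m / s" using m y by (simp add: real_sqrt_divide s_def)
  have ex: "- l * (m^2 / y - m)^2 / (2 * m^2 * (m^2 / y)) = - l * (y - m)^2 / (2 * m^2 * y)"
    using m y by (simp add: field_simps power2_eq_square)
  define E where "E = exp (- l * (y - m)^2 / (2 * m^2 * y))"
  have key: "\<And>L P E. P > 0 \<Longrightarrow> \<bar>- (m^2) / (s * s)^2\<bar> * (L / P / ((m^2 / (s * s)) * (m / s)) * E) = (s * s) / m * (L / P / ((s * s) * s) * E)"
    using m s(1) by (simp add: field_simps power2_eq_square)
  have "\<bar>- (m^2) / y^2\<bar> * igauss_density m l (m^2 / y) = \<bar>- (m^2) / (s * s)^2\<bar> * (sqrt l / sqrt (2 * pi) / ((m^2 / (s * s)) * (m / s)) * E)"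
    unfolding igauss_alt[OF m l y2] sq ex E_def[symmetric]
    by (simp only: s(2)[symmetric])
  also have "\<dots> = (s * s) / m * (sqrt l / sqrt (2 * pi) / ((s * s) * s) * E)"
    by (rule key) simp
  also have "\<dots> = (y / m) * igauss_density m l y"
    unfolding igauss_alt[OF m l y] E_def[symmetric] s_def[symmetric]
    by (simp only: s(2)[symmetric])
  finally show ?thesis .
qed

lemma uu_pos: "m > 0 \<Longrightarrow> l > 0 \<Longrightarrow> y > m \<Longrightarrow> uu m l y > 0"
proof -
  assume m: "m > 0" and l: "l > 0" and y: "y > m"
  have sy: "sqrt y > 0" "sqrt y * sqrt y = y" using y m by auto
  have "sqrt y / m - 1 / sqrt y = (sqrt y * sqrt y - m) / (m * sqrt y)"
    using sy m by (simp add: field_simps)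
  also have "\<dots> > 0" using sy m y by simp
  finally show ?thesis using l by (simp add: uu_def)
qed

lemma uu_mono: "m > 0 \<Longrightarrow> 0 < y1 \<Longrightarrow> y1 < y2 \<Longrightarrow> l > 0 \<Longrightarrow> uu m l y1 < uu m l y2"
proof -
  assume m: "m > 0" and y1: "0 < y1" and y12: "y1 < y2" and l: "l > 0"
  have a: "sqrt y1 < sqrt y2" using y12 by simp
  have b: "1 / sqrt y2 < 1 / sqrt y1" using a y1 by (simp add: divide_strict_left_mono)
  have a': "sqrt y1 / m < sqrt y2 / m" using a m by (simp add: divide_strict_right_mono)
  have "sqrt y1 / m - 1 / sqrt y1 < sqrt y2 / m - 1 / sqrt y2"
    using a' b by linarith
  then show ?thesis using l by (simp add: uu_def)
qed

lemma uu_inj: "m > 0 \<Longrightarrow> l > 0 \<Longrightarrow> inj_on (uu m l) {m<..}"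
  unfolding inj_on_def
proof (intro ballI impI)
  fix x y assume m: "m > 0" and l: "l > 0" and x: "x \<in> {m<..}" and y: "y \<in> {m<..}" and e: "uu m l x = uu m l y"
  show "x = y"
  proof (cases x y rule: linorder_cases)
    case less then show ?thesis using uu_mono[OF m _ less l] x m e by auto
  next
    case greater then show ?thesis using uu_mono[OF m _ greater l] y m e by auto
  qed
qed

lemma uu_image:
  assumes m: "m > 0" and l: "l > 0"
  shows "uu m l ` {m<..} = {0<..}"
proof (intro equalityI subsetI)
  fix x assume "x \<in> uu m l ` {m<..}"
  then show "x \<in> {0<..}" using uu_pos m l by auto
next
  fix t :: real assume t: "t \<in> {0<..}"
  define c where "c = sqrt l"
  have c: "c > 0" "c * c = l" using l by (auto simp: c_def)
  define D where "D = sqrt (t^2 * m^2 + 4 * (c * c) * m)"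
  have D: "D \<ge> 0" "D * D = t^2 * m^2 + 4 * (c * c) * m"
    using m c by (auto simp: D_def)
  define s where "s = (t * m + D) / (2 * c)"
  have s: "s > 0" unfolding s_def using t m c D by (intro divide_pos_pos add_pos_nonneg) auto
  have quad: "c * (s * s) - t * m * s - c * m = 0"
    unfolding s_def using c D(2) by (simp add: field_simps power2_eq_square)
  have sm: "c * (s * s - m) = t * m * s" using quad by (simp add: algebra_simps)
  have ym: "s * s > m"
  proof -
    have "t * m * s > 0" using t m s by simp
    then have "c * (s * s - m) > 0" using sm by simp
    then show ?thesis using c by (simp add: zero_less_mult_iff)
  qed
  have sq: "sqrt (s * s) = s" using s by simp
  have "uu m l (s * s) = c * (s / m - 1 / s)" unfolding uu_def sq c_def ..
  also have "\<dots> = c * (s * s - m) / (m * s)" using s m by (simp add: field_simps)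
  also have "\<dots> = t" using sm s m by simp
  finally show "t \<in> uu m l ` {m<..}" using ym by (intro image_eqI[of _ _ "s * s"]) auto
qed

lemma borel_imp_lebesgue_on:
  fixes f :: "real \<Rightarrow> real"
  assumes "f \<in> borel_measurable borel"
  shows "f \<in> borel_measurable (lebesgue_on S)"
  by (rule measurable_restrict_space1, rule measurable_completion) (use assms in simp)

lemma igauss_integral_1:
  fixes m l :: real
  assumes m: "m > 0" and l: "l > 0"
  shows "(\<integral>\<^sup>+x. ennreal (igauss_density m l x) \<partial>lborel) = 1"
proof -
  let ?S = "{m<..} :: real set"
  let ?F = "igauss_density m l"
  let ?F2 = "\<lambda>y. (y / m) * igauss_density m l y"
  let ?phi = "std_normal_density"
  have Sleb: "?S \<in> sets lebesgue" by simp
  have phiabs: "?phi absolutely_integrable_on {0<..}"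
    using std_normal_half by (intro nonnegative_absolutely_integrable_1) (auto simp: has_integral_integrable)
  have cv1: "(\<lambda>x. \<bar>uu' m l x\<bar> * ?phi (uu m l x)) absolutely_integrable_on ?S \<and>
             integral ?S (\<lambda>x. \<bar>uu' m l x\<bar> * ?phi (uu m l x)) = 1/2"
  proof -
    have "(\<lambda>x. \<bar>uu' m l x\<bar> * ?phi (uu m l x)) absolutely_integrable_on ?S \<and>
             integral ?S (\<lambda>x. \<bar>uu' m l x\<bar> * ?phi (uu m l x)) = 1/2 \<longleftrightarrow>
          ?phi absolutely_integrable_on (uu m l ` ?S) \<and> integral (uu m l ` ?S) ?phi = 1/2"
      by (rule has_absolute_integral_change_of_variables_1'[OF Sleb])
         (use m uu_inj[OF m l] in \<open>auto intro!: uu_deriv\<close>)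
    then show ?thesis using phiabs std_normal_half uu_image[OF m l] by (auto dest: integral_unique)
  qed
  have uu'pos: "uu' m l y > 0" if "y > 0" for y
    using that l m by (auto simp: uu'_def intro!: mult_pos_pos add_pos_pos divide_pos_pos)
  have Geq: "\<bar>uu' m l y\<bar> * ?phi (uu m l y) = (?F y + ?F2 y) / 2" if "y \<in> ?S" for y
    using that m phi_uu[OF m l, of y] uu'pos[of y] by auto
  have Ghi: "((\<lambda>y. ?F y + ?F2 y) has_integral 1) ?S"
  proof -
    have "((\<lambda>x. \<bar>uu' m l x\<bar> * ?phi (uu m l x)) has_integral 1/2) ?S"
      using cv1 by (metis absolutely_integrable_on_def has_integral_integral)
    then have "((\<lambda>x. 2 * (\<bar>uu' m l x\<bar> * ?phi (uu m l x))) has_integral 2 * (1/2)) ?S"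
      by (rule has_integral_mult_right)
    then have "((\<lambda>x. 2 * (\<bar>uu' m l x\<bar> * ?phi (uu m l x))) has_integral 1) ?S" by simp
    then show ?thesis
      by (rule has_integral_eq[rotated]) (simp add: Geq)
  qed
  have Gint: "(\<lambda>y. ?F y + ?F2 y) integrable_on ?S" using Ghi by (auto simp: has_integral_integrable)
  have Fabs: "?F absolutely_integrable_on ?S"
    by (rule measurable_bounded_by_integrable_imp_absolutely_integrable[OF _ Sleb Gint])
       (use m l in \<open>auto intro!: borel_imp_lebesgue_on simp: igauss_nonneg\<close>)
  have F2abs: "?F2 absolutely_integrable_on ?S"
    by (rule measurable_bounded_by_integrable_imp_absolutely_integrable[OF _ Sleb Gint])
       (use m l in \<open>auto intro!: borel_imp_lebesgue_on simp: igauss_nonneg\<close>)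
  define I1 where "I1 = integral ?S ?F"
  define I2 where "I2 = integral ?S ?F2"
  have I1: "(?F has_integral I1) ?S" unfolding I1_def using Fabs
    by (metis absolutely_integrable_on_def has_integral_integral)
  have I2: "(?F2 has_integral I2) ?S" unfolding I2_def using F2abs
    by (metis absolutely_integrable_on_def has_integral_integral)
  have I12: "I1 + I2 = 1"
    using has_integral_unique[OF has_integral_add[OF I1 I2] Ghi] .
  have img2: "(\<lambda>y. m^2 / y) ` ?S = {0<..<m}"
  proof (intro equalityI subsetI)
    fix x assume "x \<in> (\<lambda>y. m^2 / y) ` ?S"
    then obtain y where y: "y > m" "x = m^2 / y" by auto
    have "m^2 / y < m" using y m by (simp add: divide_less_eq power2_eq_square)
    moreover have "m^2 / y > 0" using y m by simp
    ultimately show "x \<in> {0<..<m}" using y by simp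
  next
    fix x assume x: "x \<in> {0<..<m}"
    then have "m^2 / x > m" using m by (auto simp: field_simps power2_eq_square)
    then show "x \<in> (\<lambda>y. m^2 / y) ` ?S"
      using x by (intro image_eqI[of _ _ "m^2 / x"]) (auto simp: field_simps)
  qed
  have cv2: "?F absolutely_integrable_on {0<..<m} \<and> integral {0<..<m} ?F = I2"
  proof -
    have "(\<lambda>x. \<bar>- (m^2) / x^2\<bar> * ?F (m^2 / x)) absolutely_integrable_on ?S \<and>
             integral ?S (\<lambda>x. \<bar>- (m^2) / x^2\<bar> * ?F (m^2 / x)) = I2 \<longleftrightarrow>
          ?F absolutely_integrable_on ((\<lambda>y. m^2 / y) ` ?S) \<and> integral ((\<lambda>y. m^2 / y) ` ?S) ?F = I2"
      by (rule has_absolute_integral_change_of_variables_1'[OF Sleb])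
         (use m in \<open>auto intro!: derivative_eq_intros simp: inj_on_def power2_eq_square field_simps\<close>)
    moreover have "(\<lambda>x. \<bar>- (m^2) / x^2\<bar> * ?F (m^2 / x)) absolutely_integrable_on ?S \<and>
             integral ?S (\<lambda>x. \<bar>- (m^2) / x^2\<bar> * ?F (m^2 / x)) = I2"
    proof -
      have eq: "\<And>x. x \<in> ?S \<Longrightarrow> \<bar>- (m^2) / x^2\<bar> * ?F (m^2 / x) = ?F2 x"
        using igauss_reflect[OF m l] m by auto
      have a: "(\<lambda>x. \<bar>- (m^2) / x^2\<bar> * ?F (m^2 / x)) absolutely_integrable_on ?S"
        using absolutely_integrable_spike[OF F2abs, of "{}"] eq by auto
      have b: "integral ?S (\<lambda>x. \<bar>- (m^2) / x^2\<bar> * ?F (m^2 / x)) = integral ?S ?F2"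
        by (rule integral_cong) (rule eq)
      show ?thesis using a b I2_def by simp
    qed
    ultimately show ?thesis unfolding img2 by blast
  qed
  have I2': "(?F has_integral I2) {0<..<m}"
    using cv2 by (metis absolutely_integrable_on_def has_integral_integral)
  have U: "(?F has_integral (I2 + I1)) ({0<..<m} \<union> ?S)"
  proof (rule has_integral_Un[OF I2' I1])
    have "{0<..<m} \<inter> ?S = {}" by auto
    then show "negligible ({0<..<m} \<inter> ?S)" by simp
  qed
  have Fhi: "(?F has_integral 1) {0<..}"
  proof -
    have "(?F has_integral 1) ({0<..<m} \<union> ?S)" using U I12 by (simp add: add.commute)
    moreover have "(?F has_integral 1) ({0<..<m} \<union> ?S) \<longleftrightarrow> (?F has_integral 1) {0<..}"
      by (rule has_integral_spike_set_eq) (use m in \<open>auto intro: negligible_subset[of "{m}"]\<close>)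
    ultimately show ?thesis by simp
  qed
  have "(\<integral>\<^sup>+x. ennreal (indicator {0<..} x * ?F x) \<partial>lborel) = ennreal 1"
    by (rule nn_integral_has_integral_lebesgue[OF _ Fhi]) (use l in \<open>simp add: igauss_nonneg\<close>)
  moreover have "(\<lambda>x. ennreal (indicator {0<..} x * ?F x)) = (\<lambda>x. ennreal (?F x))"
    by (auto simp: indicator_def igauss_density_def)
  ultimately show ?thesis by simp
qed

lemma kernel_finite:
  fixes h :: "real \<Rightarrow> real"
  assumes r: "r > 0" and b: "b > 0" and K: "K \<ge> 0"
    and bnd: "\<And>x. x > 0 \<Longrightarrow> h x \<le> K * (x powr (-r-1) * exp (-b/x))"
    and zero: "\<And>x. x \<le> 0 \<Longrightarrow> h x \<le> 0"
  shows "(\<integral>\<^sup>+x. ennreal (h x) \<partial>lborel) < \<infinity>"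
proof -
  have "(\<integral>\<^sup>+x. ennreal (h x) \<partial>lborel) \<le> (\<integral>\<^sup>+x. ennreal K * ennreal (indicator {0<..} x * (x powr (-r-1) * exp (-b/x))) \<partial>lborel)"
  proof (rule nn_integral_mono)
    fix x :: real
    show "ennreal (h x) \<le> ennreal K * ennreal (indicator {0<..} x * (x powr (-r-1) * exp (-b/x)))"
    proof (cases "x > 0")
      case True
      then show ?thesis using bnd[OF True] K by (simp add: ennreal_mult'[symmetric] ennreal_leI)
    next
      case False
      then show ?thesis using zero[of x] by (simp add: ennreal_eq_0_iff)
    qed
  qed
  also have "\<dots> = ennreal K * ennreal (b powr (-r) * Gamma r)"
    by (subst nn_integral_cmult) (use gamma_kernel_nn[OF r b] in auto)
  also have "\<dots> < \<infinity>" by (simp add: ennreal_mult_less_top)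
  finally show ?thesis .
qed

lemma igauss_factor:
  assumes m: "m > 0" and l: "l > 0" and x: "x > 0"
  shows "igauss_density m l x = (sqrt l / sqrt (2*pi) * exp (l / m)) * (x powr (-(1/2)-1) * exp (-(l/2)/x)) * exp (-(l / (2 * m^2)) * x)"
proof -
  have p: "x powr (-(1/2)-1) = 1 / (x * sqrt x)"
  proof -
    have a: "x powr (1 + 1/2) = x * sqrt x" using x by (simp only: powr_add powr_one powr_half_sqrt less_imp_le)
    have "x powr (-(1/2)-1) = x powr (- (1 + 1/2))" by (simp only: minus_add minus_diff_eq diff_conv_add_uminus add.commute)
    also have "\<dots> = inverse (x powr (1 + 1/2))" by (rule powr_minus)
    finally show ?thesis using a by (simp only: divide_inverse mult_1)
  qed
  have e: "exp (- l * (x - m)^2 / (2 * m^2 * x)) = exp (l / m) * exp (-(l/2)/x) * exp (-(l / (2 * m^2)) * x)"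
  proof -
    have "- l * (x - m)^2 / (2 * m^2 * x) = l / m + (-(l/2)/x) + (-(l / (2 * m^2)) * x)"
      using m x by (simp add: field_simps power2_eq_square)
    then have "exp (- l * (x - m)^2 / (2 * m^2 * x)) = exp (l / m + (-(l/2)/x) + (-(l / (2 * m^2)) * x))"
      by (rule arg_cong)
    then show ?thesis unfolding exp_add .
  qed
  have ac: "\<And>A B C D E :: real. A / D * (B * C * E) = (A * B) * (1 / D * C) * E" by simp
  show ?thesis unfolding igauss_alt[OF m l x] p e by (rule ac)
qed

lemma igauss_negmoment_finite:
  assumes m: "m > 0" and l: "l > 0" and r: "r \<ge> 0"
  shows "(\<integral>\<^sup>+x. ennreal (x powr (-r) * igauss_density m l x) \<partial>lborel) < \<infinity>"
proof (rule kernel_finite[of "r + 1/2" "l/2" "sqrt l / sqrt (2*pi) * exp (l / m)"])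
  fix x :: real assume x: "x > 0"
  define A where "A = sqrt l / sqrt (2*pi) * exp (l / m)"
  define Ex where "Ex = exp (-(l / (2 * m^2)) * x)"
  have pw: "x powr (-r) * (x powr (-(1/2)-1)) = x powr (-(r + 1/2) - 1)"
    using x by (subst powr_add[symmetric]) (simp add: algebra_simps)
  have eq: "x powr (-r) * (A * (x powr (-(1/2)-1) * exp (-(l/2)/x)) * Ex) = (A * (x powr (-(r + 1/2) - 1) * exp (-(l/2)/x))) * Ex"
    by (simp only: pw[symmetric] mult_ac)
  have "Ex \<le> 1" using x l m unfolding Ex_def by simp
  moreover have "0 \<le> A * (x powr (-(r + 1/2) - 1) * exp (-(l/2)/x))"
    using l unfolding A_def by simp
  ultimately have "(A * (x powr (-(r + 1/2) - 1) * exp (-(l/2)/x))) * Ex \<le> A * (x powr (-(r + 1/2) - 1) * exp (-(l/2)/x))"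
    by (rule mult_left_le)
  then show "x powr (-r) * igauss_density m l x \<le> sqrt l / sqrt (2*pi) * exp (l / m) * (x powr (-(r + 1/2) - 1) * exp (-(l/2)/x))"
    unfolding igauss_factor[OF m l x] A_def[symmetric] Ex_def[symmetric] eq .
qed (use l r in \<open>auto simp: igauss_density_def\<close>)

lemma igauss_expmoment_finite:
  assumes m: "m > 0" and l: "l > 0"
  shows "(\<integral>\<^sup>+x. ennreal (exp (l / (4 * m^2) * x) * igauss_density m l x) \<partial>lborel) < \<infinity>"
proof (rule kernel_finite[of "1/2" "l/2" "sqrt l / sqrt (2*pi) * exp (l / m)"])
  fix x :: real assume x: "x > 0"
  define A where "A = sqrt l / sqrt (2*pi) * exp (l / m)"
  define Ex where "Ex = exp (-(l / (4 * m^2)) * x)"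
  have ee: "exp (l / (4 * m^2) * x) * exp (-(l / (2 * m^2)) * x) = Ex"
  proof -
    have "l / (4 * m^2) * x + (-(l / (2 * m^2)) * x) = -(l / (4 * m^2)) * (x::real)"
      by (simp add: field_simps)
    then show ?thesis unfolding Ex_def by (simp only: exp_add[symmetric])
  qed
  have eq: "exp (l / (4 * m^2) * x) * (A * (x powr (-(1/2)-1) * exp (-(l/2)/x)) * exp (-(l / (2 * m^2)) * x)) = (A * (x powr (-(1/2) - 1) * exp (-(l/2)/x))) * Ex"
    by (simp only: ee[symmetric] mult_ac)
  have "Ex \<le> 1" using x l m unfolding Ex_def by simp
  moreover have "0 \<le> A * (x powr (-(1/2) - 1) * exp (-(l/2)/x))"
    using l unfolding A_def by simp
  ultimately have "(A * (x powr (-(1/2) - 1) * exp (-(l/2)/x))) * Ex \<le> A * (x powr (-(1/2) - 1) * exp (-(l/2)/x))"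
    by (rule mult_left_le)
  then show "exp (l / (4 * m^2) * x) * igauss_density m l x \<le> sqrt l / sqrt (2*pi) * exp (l / m) * (x powr (-(1/2) - 1) * exp (-(l/2)/x))"
    unfolding igauss_factor[OF m l x] A_def[symmetric] eq .
qed (use l in \<open>auto simp: igauss_density_def\<close>)

lemma normal_exp_eq:
  assumes a0: "(a0::real) > 0"
  shows "exp (y^2 / (4 * a0)) * normal_density 0 (sqrt a0) y = sqrt 2 * normal_density 0 (sqrt (2 * a0)) y"
proof -
  have e: "exp (y^2 / (4 * a0)) * exp (-(y - 0)\<^sup>2 / (2 * (sqrt a0)^2)) = exp (-(y - 0)\<^sup>2 / (2 * (sqrt (2 * a0))^2))"
  proof -
    have "y^2 / (4 * a0) + (-(y - 0)\<^sup>2 / (2 * (sqrt a0)^2)) = -(y - 0)\<^sup>2 / (2 * (sqrt (2 * a0))^2)"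
      using a0 by (simp add: field_simps)
    then show ?thesis by (simp only: exp_add[symmetric])
  qed
  have s: "sqrt (2 * pi * (sqrt (2 * a0))^2) = sqrt 2 * sqrt (2 * pi * (sqrt a0)^2)"
    using a0 by (simp add: real_sqrt_mult[symmetric] algebra_simps)
  have "exp (y^2 / (4 * a0)) * normal_density 0 (sqrt a0) y = 1 / sqrt (2 * pi * (sqrt a0)^2) * (exp (y^2 / (4 * a0)) * exp (-(y - 0)\<^sup>2 / (2 * (sqrt a0)^2)))"
    unfolding normal_density_def by (simp only: mult_ac)
  also have "\<dots> = 1 / sqrt (2 * pi * (sqrt a0)^2) * exp (-(y - 0)\<^sup>2 / (2 * (sqrt (2 * a0))^2))"
    by (simp only: e)
  also have "\<dots> = sqrt 2 * (1 / sqrt (2 * pi * (sqrt (2 * a0))^2) * exp (-(y - 0)\<^sup>2 / (2 * (sqrt (2 * a0))^2)))"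
    unfolding s by simp
  also have "\<dots> = sqrt 2 * normal_density 0 (sqrt (2 * a0)) y"
    unfolding normal_density_def ..
  finally show ?thesis .
qed

lemma normal_exp_finite:
  assumes a0: "a0 > 0"
  shows "(\<integral>\<^sup>+y. ennreal (exp (y^2 / (4 * a0)) * normal_density 0 (sqrt a0) y) \<partial>lborel) < \<infinity>"
proof -
  have "(\<integral>\<^sup>+y. ennreal (exp (y^2 / (4 * a0)) * normal_density 0 (sqrt a0) y) \<partial>lborel)
      = (\<integral>\<^sup>+y. ennreal (sqrt 2) * ennreal (normal_density 0 (sqrt (2 * a0)) y) \<partial>lborel)"
    by (intro nn_integral_cong) (simp add: normal_exp_eq[OF a0] ennreal_mult)
  also have "\<dots> = ennreal (sqrt 2)"
    using a0 by (subst nn_integral_cmult) (auto simp: normal_integral_1)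
  finally show ?thesis by simp
qed

lemma nn_prod4:
  fixes f1 f2 f3 :: "real \<Rightarrow> ennreal" and g :: "real^'p::finite \<Rightarrow> ennreal"
  assumes [measurable]: "f1 \<in> borel_measurable borel" "f2 \<in> borel_measurable borel" "f3 \<in> borel_measurable borel"
     "g \<in> borel_measurable borel"
  shows "(\<integral>\<^sup>+x. f1 (fst x) * f2 (fst (snd x)) * f3 (fst (snd (snd x))) * g (snd (snd (snd x))) \<partial>(lborel :: 'p param measure))
     = (\<integral>\<^sup>+x. f1 x \<partial>lborel) * (\<integral>\<^sup>+x. f2 x \<partial>lborel) * (\<integral>\<^sup>+x. f3 x \<partial>lborel) * (\<integral>\<^sup>+x. g x \<partial>lborel)"
proof -
  let ?G3 = "\<lambda>z::real \<times> (real^'p). f3 (fst z) * g (snd z)"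
  let ?G2 = "\<lambda>y::real \<times> real \<times> (real^'p). f2 (fst y) * ?G3 (snd y)"
  have [measurable]: "?G3 \<in> borel_measurable borel" by (simp only: borel_prod[symmetric]) measurable
  have [measurable]: "?G2 \<in> borel_measurable borel" by (simp only: borel_prod[symmetric]) measurable
  have "(\<integral>\<^sup>+x. f1 (fst x) * f2 (fst (snd x)) * f3 (fst (snd (snd x))) * g (snd (snd (snd x))) \<partial>(lborel :: 'p param measure))
      = (\<integral>\<^sup>+x. f1 (fst x) * ?G2 (snd x) \<partial>(lborel :: 'p param measure))"
    by (simp add: mult.assoc)
  also have "\<dots> = (\<integral>\<^sup>+x. f1 x \<partial>lborel) * (\<integral>\<^sup>+y. ?G2 y \<partial>lborel)"
    by (rule nn_prod2) measurable
  also have "(\<integral>\<^sup>+y. ?G2 y \<partial>lborel) = (\<integral>\<^sup>+x. f2 x \<partial>lborel) * (\<integral>\<^sup>+z. ?G3 z \<partial>lborel)"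
    by (rule nn_prod2) measurable
  also have "(\<integral>\<^sup>+z. ?G3 z \<partial>lborel) = (\<integral>\<^sup>+x. f3 x \<partial>lborel) * (\<integral>\<^sup>+x. g x \<partial>lborel)"
    by (rule nn_prod2) measurable
  finally show ?thesis by (simp add: mult.assoc)
qed

definition nprod :: "real \<Rightarrow> real^'p::finite \<Rightarrow> real" where
  "nprod a0 \<beta> = (\<Prod>i\<in>UNIV. normal_density 0 (sqrt a0) (\<beta> $ i))"

lemma nprod_measurable[measurable]: "nprod a0 \<in> borel_measurable borel"
  unfolding nprod_def[abs_def] by measurable

lemma nprod_nonneg: "nprod a0 \<beta> \<ge> 0"
  unfolding nprod_def by (intro prod_nonneg) auto

lemma nprod_pos: "a0 > 0 \<Longrightarrow> nprod a0 \<beta> > 0"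
  unfolding nprod_def by (intro prod_pos) (auto intro: normal_density_pos)

lemma nprod_integral: "a0 > 0 \<Longrightarrow> (\<integral>\<^sup>+\<beta>. ennreal (nprod a0 (\<beta> :: real^'p::finite)) \<partial>lborel) = 1"
  unfolding nprod_def by (subst nn_vec_prod) (auto simp: normal_integral_1)

lemma pd_eq: "prior_density a0 a1 b1 a2 b2 mu lam x =
   ig_density a1 b1 (fst x) * igauss_density mu lam (fst (snd x)) * ig_density a2 b2 (fst (snd (snd x))) * nprod a0 (snd (snd (snd x)))"
  by (simp add: prior_density_def nprod_def split_beta)

lemma pd_measurable[measurable]: "prior_density a0 a1 b1 a2 b2 mu lam \<in> borel_measurable borel"
proof -
  have "prior_density a0 a1 b1 a2 b2 mu lam = (\<lambda>x. ig_density a1 b1 (fst x) * igauss_density mu lam (fst (snd x)) * ig_density a2 b2 (fst (snd (snd x))) * nprod a0 (snd (snd (snd x))))"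
    by (simp add: pd_eq[abs_def])
  also have "\<dots> \<in> borel_measurable borel" by (simp only: borel_prod[symmetric]) measurable
  finally show ?thesis .
qed

lemma term_eq:
  fixes h1 h2 h3 :: "real \<Rightarrow> real" and hb :: "real^'p::finite \<Rightarrow> real"
  assumes [measurable]: "h1 \<in> borel_measurable borel" "h2 \<in> borel_measurable borel" "h3 \<in> borel_measurable borel"
     "hb \<in> borel_measurable borel"
    and nn: "\<And>x. h1 x \<ge> 0" "\<And>x. h2 x \<ge> 0" "\<And>x. h3 x \<ge> 0" "\<And>x. hb x \<ge> 0"
    and hyp: "a0 > 0" "a1 > 0" "b1 > 0" "a2 > 0" "b2 > 0" "mu > 0" "lam > 0"
  shows "(\<integral>\<^sup>+x. ennreal (prior_density a0 a1 b1 a2 b2 mu lam x *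
            (h1 (fst x) * h2 (fst (snd x)) * h3 (fst (snd (snd x))) * hb (snd (snd (snd x))))) \<partial>(lborel :: 'p param measure))
     = (\<integral>\<^sup>+x. ennreal (h1 x * ig_density a1 b1 x) \<partial>lborel) * (\<integral>\<^sup>+x. ennreal (h2 x * igauss_density mu lam x) \<partial>lborel)
       * (\<integral>\<^sup>+x. ennreal (h3 x * ig_density a2 b2 x) \<partial>lborel) * (\<integral>\<^sup>+x. ennreal (hb x * nprod a0 x) \<partial>lborel)"
proof -
  have "(\<integral>\<^sup>+x. ennreal (prior_density a0 a1 b1 a2 b2 mu lam x *
            (h1 (fst x) * h2 (fst (snd x)) * h3 (fst (snd (snd x))) * hb (snd (snd (snd x))))) \<partial>(lborel :: 'p param measure))
     = (\<integral>\<^sup>+x. (\<lambda>t. ennreal (h1 t * ig_density a1 b1 t)) (fst x) * (\<lambda>t. ennreal (h2 t * igauss_density mu lam t)) (fst (snd x))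
        * (\<lambda>t. ennreal (h3 t * ig_density a2 b2 t)) (fst (snd (snd x))) * (\<lambda>t. ennreal (hb t * nprod a0 t)) (snd (snd (snd x))) \<partial>(lborel :: 'p param measure))"
  proof (rule nn_integral_cong)
    fix x :: "'p param"
    have n1: "0 \<le> h1 (fst x) * ig_density a1 b1 (fst x)" using nn hyp by (simp add: ig_nonneg)
    have n2: "0 \<le> h2 (fst (snd x)) * igauss_density mu lam (fst (snd x))" using nn hyp by (simp add: igauss_nonneg)
    have n3: "0 \<le> h3 (fst (snd (snd x))) * ig_density a2 b2 (fst (snd (snd x)))" using nn hyp by (simp add: ig_nonneg)
    have n4: "0 \<le> hb (snd (snd (snd x))) * nprod a0 (snd (snd (snd x)))" using nn by (simp add: nprod_nonneg)
    have "prior_density a0 a1 b1 a2 b2 mu lam x *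
            (h1 (fst x) * h2 (fst (snd x)) * h3 (fst (snd (snd x))) * hb (snd (snd (snd x))))
        = (h1 (fst x) * ig_density a1 b1 (fst x)) * (h2 (fst (snd x)) * igauss_density mu lam (fst (snd x)))
          * (h3 (fst (snd (snd x))) * ig_density a2 b2 (fst (snd (snd x)))) * (hb (snd (snd (snd x))) * nprod a0 (snd (snd (snd x))))"
      unfolding pd_eq by (simp only: mult_ac)
    then show "ennreal (prior_density a0 a1 b1 a2 b2 mu lam x *
            (h1 (fst x) * h2 (fst (snd x)) * h3 (fst (snd (snd x))) * hb (snd (snd (snd x)))))
       = (\<lambda>t. ennreal (h1 t * ig_density a1 b1 t)) (fst x) * (\<lambda>t. ennreal (h2 t * igauss_density mu lam t)) (fst (snd x))
        * (\<lambda>t. ennreal (h3 t * ig_density a2 b2 t)) (fst (snd (snd x))) * (\<lambda>t. ennreal (hb t * nprod a0 t)) (snd (snd (snd x)))"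
      by (simp only: ennreal_mult[OF mult_nonneg_nonneg[OF mult_nonneg_nonneg[OF n1 n2] n3] n4] ennreal_mult[OF mult_nonneg_nonneg[OF n1 n2] n3] ennreal_mult[OF n1 n2])
  qed
  also have "\<dots> = (\<integral>\<^sup>+x. ennreal (h1 x * ig_density a1 b1 x) \<partial>lborel) * (\<integral>\<^sup>+x. ennreal (h2 x * igauss_density mu lam x) \<partial>lborel)
       * (\<integral>\<^sup>+x. ennreal (h3 x * ig_density a2 b2 x) \<partial>lborel) * (\<integral>\<^sup>+x. ennreal (hb x * nprod a0 x) \<partial>lborel)"
    by (rule nn_prod4) auto
  finally show ?thesis .
qed

definition pdpos :: "real \<Rightarrow> real \<Rightarrow> real \<Rightarrow> real \<Rightarrow> real \<Rightarrow> real \<Rightarrow> real \<Rightarrow> ('p::finite) param \<Rightarrow> real" where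
  "pdpos a0 a1 b1 a2 b2 mu lam x =
     (b1 powr a1 / Gamma a1 * fst x powr (- a1 - 1) * exp (- b1 / fst x)) *
     (sqrt (lam / (2 * pi * fst (snd x) ^ 3)) * exp (- lam * (fst (snd x) - mu)^2 / (2 * mu^2 * fst (snd x)))) *
     (b2 powr a2 / Gamma a2 * fst (snd (snd x)) powr (- a2 - 1) * exp (- b2 / fst (snd (snd x)))) *
     (\<Prod>i\<in>UNIV. 1 / sqrt (2 * pi * (sqrt a0)\<^sup>2) * exp (-((snd (snd (snd x)) $ i) - 0)\<^sup>2 / (2 * (sqrt a0)\<^sup>2)))"

lemma pd_cont:
  fixes x0 :: "'p::finite param"
  assumes x0: "fst x0 > 0" "fst (snd x0) > 0" "fst (snd (snd x0)) > 0" and mu: "mu > 0" and a0: "a0 > 0"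
  shows "\<exists>e>0. continuous_on (ball x0 e) (prior_density a0 a1 b1 a2 b2 mu lam)"
proof -
  define e where "e = min (fst x0) (min (fst (snd x0)) (fst (snd (snd x0))))"
  have e: "e > 0" using x0 by (simp add: e_def)
  have pos: "fst x > 0 \<and> fst (snd x) > 0 \<and> fst (snd (snd x)) > 0" if "x \<in> ball x0 e" for x
  proof -
    have d: "dist x0 x < e" using that by simp
    have d1: "dist (fst x0) (fst x) < e" using le_less_trans[OF dist_fst_le d] .
    have d2: "dist (fst (snd x0)) (fst (snd x)) < e"
      using le_less_trans[OF dist_fst_le le_less_trans[OF dist_snd_le d]] .
    have d3: "dist (fst (snd (snd x0))) (fst (snd (snd x))) < e"
      using le_less_trans[OF dist_fst_le le_less_trans[OF dist_snd_le le_less_trans[OF dist_snd_le d]]] .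
    show ?thesis using d1 d2 d3 unfolding e_def dist_real_def by auto
  qed
  have eq: "prior_density a0 a1 b1 a2 b2 mu lam x = pdpos a0 a1 b1 a2 b2 mu lam x" if "x \<in> ball x0 e" for x
    using pos[OF that] unfolding pd_eq pdpos_def nprod_def ig_density_def igauss_density_def normal_density_def
    by simp
  have "continuous_on (ball x0 e) (pdpos a0 a1 b1 a2 b2 mu lam)"
    unfolding pdpos_def
    apply (intro continuous_intros)
    using mu a0 by (auto dest!: pos)
  moreover have "continuous_on (ball x0 e) (prior_density a0 a1 b1 a2 b2 mu lam) = continuous_on (ball x0 e) (pdpos a0 a1 b1 a2 b2 mu lam)"
    by (rule continuous_on_cong[OF refl eq])
  ultimately have "continuous_on (ball x0 e) (prior_density a0 a1 b1 a2 b2 mu lam)" by simp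
  then show ?thesis using e by blast
qed

lemma A3:
  fixes x0 :: "'p::finite param"
  assumes hyp: "a0 > 0" "a1 > 0" "b1 > 0" "a2 > 0" "b2 > 0" "mu > 0" "lam > 0"
    and x0: "fst x0 > 0" "fst (snd x0) > 0" "fst (snd (snd x0)) > 0"
  shows "assumption_A3 (prior_density a0 a1 b1 a2 b2 mu lam) x0"
proof -
  let ?pd = "prior_density a0 a1 b1 a2 b2 mu lam"
  have nn: "?pd x \<ge> 0" for x
    unfolding pd_eq using hyp by (intro mult_nonneg_nonneg) (auto simp: ig_nonneg igauss_nonneg nprod_nonneg)
  have int1: "(\<integral>\<^sup>+x. ennreal (?pd x) \<partial>(lborel :: 'p param measure)) = 1"
  proof -
    have "(\<integral>\<^sup>+x. ennreal (?pd x) \<partial>(lborel :: 'p param measure)) =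
      (\<integral>\<^sup>+x. ennreal (?pd x * ((\<lambda>_. 1) (fst x) * (\<lambda>_. 1) (fst (snd x)) * (\<lambda>_. 1) (fst (snd (snd x))) * (\<lambda>_. 1) (snd (snd (snd x))))) \<partial>(lborel :: 'p param measure))"
      by simp
    also have "\<dots> = (\<integral>\<^sup>+x. ennreal (1 * ig_density a1 b1 x) \<partial>lborel) * (\<integral>\<^sup>+x. ennreal (1 * igauss_density mu lam x) \<partial>lborel)
       * (\<integral>\<^sup>+x. ennreal (1 * ig_density a2 b2 x) \<partial>lborel) * (\<integral>\<^sup>+x. ennreal (1 * nprod a0 (x :: real^'p)) \<partial>lborel)"
      by (rule term_eq) (use hyp in auto)
    also have "\<dots> = 1"
      using hyp by (simp add: ig_integral_1 igauss_integral_1 nprod_integral)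
    finally show ?thesis .
  qed
  have mom: "(\<integral>\<^sup>+x. ennreal ((fst (snd (snd x))) powr (- (real n / 2)) * ?pd x) \<partial>(lborel :: 'p param measure)) < \<infinity>" for n :: nat
  proof -
    have "(\<integral>\<^sup>+x. ennreal ((fst (snd (snd x))) powr (- (real n / 2)) * ?pd x) \<partial>(lborel :: 'p param measure)) =
      (\<integral>\<^sup>+x. ennreal (?pd x * ((\<lambda>_. 1) (fst x) * (\<lambda>_. 1) (fst (snd x)) * (\<lambda>t. t powr (- (real n / 2))) (fst (snd (snd x))) * (\<lambda>_. 1) (snd (snd (snd x))))) \<partial>(lborel :: 'p param measure))"
      by (simp add: mult.commute)
    also have "\<dots> = (\<integral>\<^sup>+x. ennreal (1 * ig_density a1 b1 x) \<partial>lborel) * (\<integral>\<^sup>+x. ennreal (1 * igauss_density mu lam x) \<partial>lborel)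
       * (\<integral>\<^sup>+x. ennreal (x powr (- (real n / 2)) * ig_density a2 b2 x) \<partial>lborel) * (\<integral>\<^sup>+x. ennreal (1 * nprod a0 (x :: real^'p)) \<partial>lborel)"
      by (rule term_eq) (use hyp in auto)
    also have "\<dots> < \<infinity>"
      using hyp by (simp add: ig_integral_1 igauss_integral_1 nprod_integral ig_moment)
    finally show ?thesis .
  qed
  have pos: "?pd x0 > 0"
    unfolding pd_eq using hyp x0 by (intro mult_pos_pos) (auto simp: ig_pos igauss_pos nprod_pos)
  show ?thesis
    unfolding assumption_A3_def
    using nn int1 mom pos pd_cont[OF x0 hyp(6) hyp(1), of a1 b1 a2 b2 lam] by auto
qed

lemma low_bound:
  fixes t s r :: real
  assumes "0 < t" "t < s" "r > 0"
  shows "1 \<le> s powr r * t powr (-r)"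
proof -
  have "s powr r * t powr (-r) = (s / t) powr r"
    using assms by (subst powr_divide) (auto simp: powr_minus_divide)
  moreover have "1 \<le> (s / t) powr r"
    using assms by (intro ge_one_powr_ge_zero) auto
  ultimately show ?thesis by simp
qed

lemma high_bound:
  fixes t T q :: real
  assumes "0 < T" "T < t" "q > 0"
  shows "1 \<le> T powr (-q) * t powr q"
proof -
  have "T powr (-q) * t powr q = (t / T) powr q"
    using assms by (subst powr_divide) (auto simp: powr_minus_divide)
  moreover have "1 \<le> (t / T) powr q"
    using assms by (intro ge_one_powr_ge_zero) auto
  ultimately show ?thesis by simp
qed

lemma exp_bound:
  fixes y T c :: real
  assumes "T < y" "c \<ge> 0"
  shows "1 \<le> exp (-(c * T)) * exp (c * y)"
proof -
  have "exp (-(c * T)) * exp (c * y) = exp (c * (y - T))"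
    by (simp add: exp_add[symmetric] algebra_simps)
  moreover have "c * (y - T) \<ge> 0" using assms by simp
  ultimately show ?thesis by simp
qed

lemma small_term:
  fixes c :: "nat \<Rightarrow> real" and M :: ennreal
  assumes M: "M < \<infinity>" and c: "\<And>n. c n \<ge> 0" and lim: "((\<lambda>n. c n * real n powr E) \<longlongrightarrow> 0) sequentially"
  shows "eventually (\<lambda>n. ennreal (c n) * M \<le> ennreal (real n powr (-E) / 8)) sequentially"
proof -
  obtain m where m: "M = ennreal m" "m \<ge> 0" using M by (cases M) auto
  define eps where "eps = 1 / (8 * (m + 1))"
  have eps: "eps > 0" using m by (simp add: eps_def)
  have ev1: "eventually (\<lambda>n. \<bar>c n * real n powr E\<bar> < eps) sequentially"
    using lim eps by (auto simp: tendsto_iff dist_real_def)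
  have ev2: "eventually (\<lambda>n. n \<ge> 1) sequentially" by (rule eventually_ge_at_top)
  show ?thesis
    using ev1 ev2
  proof eventually_elim
    case (elim n)
    have np: "real n > 0" using elim by simp
    have one: "real n powr E * real n powr (-E) = 1"
      using np by (simp add: powr_add[symmetric])
    have "c n = (c n * real n powr E) * real n powr (-E)"
      using one by (simp add: mult.assoc)
    also have "\<dots> \<le> eps * real n powr (-E)"
      using elim c[of n] by (intro mult_right_mono) auto
    finally have cn: "c n \<le> eps * real n powr (-E)" .
    have "c n * m \<le> c n * (m + 1)" using c[of n] by (simp add: mult_left_mono)
    also have "\<dots> \<le> eps * real n powr (-E) * (m + 1)" using cn m by (intro mult_right_mono) auto
    also have "\<dots> = real n powr (-E) / 8" using m by (simp add: eps_def field_simps)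
    finally have "c n * m \<le> real n powr (-E) / 8" .
    then show ?case using m c[of n] by (simp add: ennreal_mult[symmetric] ennreal_leI)
  qed
qed

lemma pow_lim:
  fixes a r E :: real
  assumes "a * r + E < 0"
  shows "((\<lambda>n. (real n powr a) powr r * real n powr E) \<longlongrightarrow> 0) sequentially"
proof -
  have eq: "(real n powr a) powr r * real n powr E = real n powr (a * r + E)" for n :: nat
    by (simp add: powr_powr powr_add)
  show ?thesis unfolding eq
    by (rule tendsto_neg_powr[OF assms filterlim_real_sequentially])
qed

lemma term_bound:
  fixes A :: "('p::finite) param set" and hx hy hz :: "real \<Rightarrow> real" and hw :: "real^'p \<Rightarrow> real"
  assumes A: "A \<in> sets borel"
    and [measurable]: "hx \<in> borel_measurable borel" "hy \<in> borel_measurable borel" "hz \<in> borel_measurable borel"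
     "hw \<in> borel_measurable borel"
    and nn: "\<And>x. hx x \<ge> 0" "\<And>x. hy x \<ge> 0" "\<And>x. hz x \<ge> 0" "\<And>x. hw x \<ge> 0"
    and hyp: "a0 > 0" "a1 > 0" "b1 > 0" "a2 > 0" "b2 > 0" "mu > 0" "lam > 0"
    and c: "c \<ge> 0"
    and cover: "\<And>x. x \<in> A \<Longrightarrow> 1 \<le> c * (hx (fst x) * hy (fst (snd x)) * hz (fst (snd (snd x))) * hw (snd (snd (snd x))))"
  shows "emeasure (density lborel (\<lambda>x. ennreal (prior_density a0 a1 b1 a2 b2 mu lam x))) A \<le>
    ennreal c * ((\<integral>\<^sup>+x. ennreal (hx x * ig_density a1 b1 x) \<partial>lborel) * (\<integral>\<^sup>+x. ennreal (hy x * igauss_density mu lam x) \<partial>lborel)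
       * (\<integral>\<^sup>+x. ennreal (hz x * ig_density a2 b2 x) \<partial>lborel) * (\<integral>\<^sup>+x. ennreal (hw x * nprod a0 x) \<partial>lborel))"
proof -
  let ?pd = "prior_density a0 a1 b1 a2 b2 mu lam"
  let ?H = "\<lambda>x::'p param. hx (fst x) * hy (fst (snd x)) * hz (fst (snd (snd x))) * hw (snd (snd (snd x)))"
  have nnpd: "?pd x \<ge> 0" for x
    unfolding pd_eq using hyp by (intro mult_nonneg_nonneg) (auto simp: ig_nonneg igauss_nonneg nprod_nonneg)
  have nnH: "?H x \<ge> 0" for x using nn by (intro mult_nonneg_nonneg) auto
  have Hm[measurable]: "?H \<in> borel_measurable borel" by (simp only: borel_prod[symmetric]) measurable
  have "emeasure (density lborel (\<lambda>x. ennreal (?pd x))) A = (\<integral>\<^sup>+x. ennreal (?pd x) * indicator A x \<partial>lborel)"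
    using A by (subst emeasure_density) auto
  also have "\<dots> \<le> (\<integral>\<^sup>+x. ennreal c * ennreal (?pd x * ?H x) \<partial>lborel)"
  proof (rule nn_integral_mono)
    fix x :: "'p param"
    show "ennreal (?pd x) * indicator A x \<le> ennreal c * ennreal (?pd x * ?H x)"
    proof (cases "x \<in> A")
      case True
      have "?pd x \<le> ?pd x * (c * ?H x)"
        using cover[OF True] nnpd[of x] by (simp add: mult_le_cancel_left1)
      then have "?pd x \<le> c * (?pd x * ?H x)" by (simp add: mult_ac)
      then show ?thesis using True c nnpd[of x] nnH[of x]
        by (simp add: ennreal_mult[symmetric] ennreal_leI)
    qed simp
  qed
  also have "\<dots> = ennreal c * (\<integral>\<^sup>+x. ennreal (?pd x * ?H x) \<partial>lborel)"
    by (rule nn_integral_cmult) measurable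
  also have "(\<integral>\<^sup>+x. ennreal (?pd x * ?H x) \<partial>lborel) =
     (\<integral>\<^sup>+x. ennreal (hx x * ig_density a1 b1 x) \<partial>lborel) * (\<integral>\<^sup>+x. ennreal (hy x * igauss_density mu lam x) \<partial>lborel)
       * (\<integral>\<^sup>+x. ennreal (hz x * ig_density a2 b2 x) \<partial>lborel) * (\<integral>\<^sup>+x. ennreal (hw x * nprod a0 x) \<partial>lborel)"
    by (rule term_eq) (use nn hyp in auto)
  finally show ?thesis .
qed

lemma pred_borel_set: "Measurable.pred borel P \<Longrightarrow> {x. P x} \<in> sets borel"
  by (drule predE) simp

lemma zero_set:
  assumes hyp: "a0 > 0" "a1 > 0" "b1 > 0" "a2 > 0" "b2 > 0" "mu > 0" "lam > 0"
  shows "emeasure (density lborel (\<lambda>x. ennreal (prior_density a0 a1 b1 a2 b2 mu lam x)))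
     {x :: ('p::finite) param. \<not> (fst x > 0 \<and> fst (snd x) > 0 \<and> fst (snd (snd x)) > 0)} = 0"
proof -
  let ?Z = "{x :: 'p param. \<not> (fst x > 0 \<and> fst (snd x) > 0 \<and> fst (snd (snd x)) > 0)}"
  have Z: "?Z \<in> sets borel" by (rule pred_borel_set, simp only: borel_prod[symmetric]) measurable
  have "emeasure (density lborel (\<lambda>x. ennreal (prior_density a0 a1 b1 a2 b2 mu lam x))) ?Z
     = (\<integral>\<^sup>+x. ennreal (prior_density a0 a1 b1 a2 b2 mu lam x) * indicator ?Z x \<partial>lborel)"
    using Z by (subst emeasure_density) auto
  also have "\<dots> = (\<integral>\<^sup>+x. 0 \<partial>(lborel :: 'p param measure))"
    by (rule nn_integral_cong) (auto simp: pd_eq ig_density_def igauss_density_def split: split_indicator)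
  finally show ?thesis by simp
qed

lemma cover_real:
  fixes N t a u B r1 r21 r22 r31 r32 :: real
  assumes N: "N > 0" and t: "t > 0" and u: "u > 0" and B: "B \<ge> 0"
    and nots: "\<not> (B / t \<le> N powr r1 \<and> N powr (-r21) \<le> u / t \<and> u / t \<le> N powr r22 \<and> N powr (-r31) \<le> a \<and> a \<le> N powr r32)"
  shows "t < N powr (-(r1/2)) \<or> N powr (r1/2) < B \<or> N powr (r21/2) < t \<or> u < N powr (-(r21/2)) \<or>
         t < N powr (-(r22/2)) \<or> N powr (r22/2) < u \<or> a < N powr (-r31) \<or> N powr r32 < a"
proof (rule ccontr)
  assume "\<not> ?thesis"
  then have h: "N powr (-(r1/2)) \<le> t" "B \<le> N powr (r1/2)" "t \<le> N powr (r21/2)" "N powr (-(r21/2)) \<le> u"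
    "N powr (-(r22/2)) \<le> t" "u \<le> N powr (r22/2)" "N powr (-r31) \<le> a" "a \<le> N powr r32"
    by auto
  have c1: "B / t \<le> N powr r1"
  proof -
    have "B / t \<le> N powr (r1/2) / N powr (-(r1/2))"
      by (rule frac_le) (use h B N in auto)
    also have "\<dots> = N powr r1" using N by (simp add: powr_diff[symmetric])
    finally show ?thesis .
  qed
  have c2: "N powr (-r21) \<le> u / t"
  proof -
    have "N powr (-r21) = N powr (-(r21/2)) / N powr (r21/2)" using N by (simp add: powr_diff[symmetric])
    also have "\<dots> \<le> u / t"
      by (rule frac_le) (use h t u N in auto)
    finally show ?thesis .
  qed
  have c3: "u / t \<le> N powr r22"
  proof -
    have "u / t \<le> N powr (r22/2) / N powr (-(r22/2))"
      by (rule frac_le) (use h u N in auto)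
    also have "\<dots> = N powr r22" using N by (simp add: powr_diff[symmetric])
    finally show ?thesis .
  qed
  show False using nots c1 c2 c3 h(7,8) by auto
qed

lemma sieve_mem:
  "x \<in> sieve_E r1 r21 r22 r31 r32 n \<longleftrightarrow>
     fst x > 0 \<and> fst (snd x) > 0 \<and> fst (snd (snd x)) > 0 \<and>
      (norm (snd (snd (snd x))))^2 / fst x \<le> real n powr r1 \<and>
      real n powr (- r21) \<le> fst (snd (snd x)) / fst x \<and> fst (snd (snd x)) / fst x \<le> real n powr r22 \<and>
      real n powr (- r31) \<le> fst (snd x) \<and> fst (snd x) \<le> real n powr r32"
  by (simp add: sieve_E_def split_beta)

lemma exp_lim:
  fixes c r E :: real
  assumes "c > 0" "r > 0"
  shows "((\<lambda>n::nat. exp (-(c * real n powr r)) * real n powr E) \<longlongrightarrow> 0) sequentially"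
  using assms by real_asymp

lemma sub_step:
  assumes "A \<in> sets M" "B \<in> sets M" "emeasure M A \<le> a" "emeasure M B \<le> b"
  shows "emeasure M (A \<union> B) \<le> a + b"
  using emeasure_subadditive[OF assms(1,2)] add_mono[OF assms(3,4)] by (rule order.trans)

lemma norm_sq_vec: "(norm (b :: real^'p::finite))^2 = (\<Sum>i\<in>UNIV. (b $ i)^2)"
  by (simp add: norm_vec_def L2_set_def sum_nonneg)

lemma fin_ig: "a > 0 \<Longrightarrow> b > 0 \<Longrightarrow> q < a \<Longrightarrow> (\<integral>\<^sup>+x. ennreal (x powr q * ig_density a b x) \<partial>lborel) < \<infinity>"
  by (simp add: ig_moment)

lemma fin_ig1: "a > 0 \<Longrightarrow> b > 0 \<Longrightarrow> (\<integral>\<^sup>+x. ennreal (1 * ig_density a b x) \<partial>lborel) < \<infinity>"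
  by (simp add: ig_integral_1)

lemma fin_igauss1: "m > 0 \<Longrightarrow> l > 0 \<Longrightarrow> (\<integral>\<^sup>+x. ennreal (1 * igauss_density m l x) \<partial>lborel) < \<infinity>"
  by (simp add: igauss_integral_1)

lemma fin_nprod1: "a0 > 0 \<Longrightarrow> (\<integral>\<^sup>+x. ennreal (1 * nprod a0 (x :: real^'p::finite)) \<partial>lborel) < \<infinity>"
  by (simp add: nprod_integral)

lemma fin_nprod_exp:
  assumes a0: "a0 > 0"
  shows "(\<integral>\<^sup>+x. ennreal ((\<Prod>i\<in>UNIV. exp (1 / (4 * a0) * (x $ i)^2)) * nprod a0 (x :: real^'p::finite)) \<partial>lborel) < \<infinity>"
proof -
  let ?h = "\<lambda>y. exp (y^2 / (4 * a0)) * normal_density 0 (sqrt a0) y"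
  have "(\<integral>\<^sup>+x. ennreal ((\<Prod>i\<in>UNIV. exp (1 / (4 * a0) * (x $ i)^2)) * nprod a0 (x :: real^'p::finite)) \<partial>lborel)
      = (\<integral>\<^sup>+x. ennreal (\<Prod>i\<in>UNIV. ?h ((x :: real^'p) $ i)) \<partial>lborel)"
    by (simp add: nprod_def prod.distrib[symmetric])
  also have "\<dots> = (\<integral>\<^sup>+x. ennreal (?h x) \<partial>lborel) ^ CARD('p)"
    by (rule nn_vec_prod) auto
  also have "\<dots> < \<infinity>"
    using normal_exp_finite[OF a0] by (simp add: power_less_top_ennreal)
  finally show ?thesis .
qed

lemma prod4_fin: "(A::ennreal) < \<infinity> \<Longrightarrow> B < \<infinity> \<Longrightarrow> C < \<infinity> \<Longrightarrow> D < \<infinity> \<Longrightarrow> A * B * C * D < \<infinity>"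
  by (simp add: ennreal_mult_less_top)

lemma eight: fixes y :: real assumes "y \<ge> 0" shows "0 + (ennreal (y/8) + (ennreal (y/8) + (ennreal (y/8) + (ennreal (y/8) + (ennreal (y/8) + (ennreal (y/8) + (ennreal (y/8) + ennreal (y/8)))))))) = ennreal y"
proof -
  have "0 + (ennreal (y/8) + (ennreal (y/8) + (ennreal (y/8) + (ennreal (y/8) + (ennreal (y/8) + (ennreal (y/8) + (ennreal (y/8) + ennreal (y/8)))))))) = ennreal (y/8 + (y/8 + (y/8 + (y/8 + (y/8 + (y/8 + (y/8 + y/8)))))))"
    using assms by (simp only: ennreal_plus[symmetric] add_0_left divide_nonneg_pos zero_less_numeral add_nonneg_nonneg)
  also have "y/8 + (y/8 + (y/8 + (y/8 + (y/8 + (y/8 + (y/8 + y/8)))))) = y" by simp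
  finally show ?thesis .
qed

lemma part2:
  fixes r1 r21 r22 r31 r32 a0 a1 b1 a2 b2 mu lam :: real
  assumes rpos: "0 < r1" "0 < r21" "0 < r22" "0 < r31" "0 < r32"
    and hyp: "a0 > 0" "a1 > 0" "b1 > 0" "a2 > 0" "b2 > 0" "mu > 0" "lam > 0"
    and a1_big: "a1 > 2 * (3 * real CARD('p::finite) + 6) / r21"
    and a2_big: "a2 > 2 * (3 * real CARD('p) + 6) / r22"
  shows "\<forall>\<^sub>F n in sequentially.
            emeasure (density lborel (\<lambda>x. ennreal (prior_density a0 a1 b1 a2 b2 mu lam x)))
              (UNIV - (sieve_E r1 r21 r22 r31 r32 n :: 'p param set))
            \<le> ennreal (real n powr (- (3 * real CARD('p) + 6)))"
proof -
  define E where "E = 3 * real CARD('p) + 6"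
  have Epos: "E > 0" by (simp add: E_def)
  define M where "M = density lborel (\<lambda>x::'p param. ennreal (prior_density a0 a1 b1 a2 b2 mu lam x))"
  have setsM: "sets M = sets borel" by (simp add: M_def)
  define P where "P = (\<lambda>x::'p param. fst x > 0 \<and> fst (snd x) > 0 \<and> fst (snd (snd x)) > 0)"
  have Pm[measurable]: "Measurable.pred borel P" unfolding P_def by (simp only: borel_prod[symmetric]) measurable
  define R1 where "R1 = 2 * (E + 1) / r1"
  define Q1 where "Q1 = (a1 + 2 * E / r21) / 2"
  define R4 where "R4 = 2 * (E + 1) / r21"
  define R5 where "R5 = 2 * (E + 1) / r22"
  define Q2 where "Q2 = (a2 + 2 * E / r22) / 2"
  define R7 where "R7 = (E + 1) / r31"
  define kap where "kap = lam / (4 * mu^2)"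
  have R1: "R1 > 0" using rpos Epos by (simp add: R1_def)
  have R4: "R4 > 0" using rpos Epos by (simp add: R4_def)
  have R5: "R5 > 0" using rpos Epos by (simp add: R5_def)
  have R7: "R7 > 0" using rpos Epos by (simp add: R7_def)
  have kap: "kap > 0" using hyp by (simp add: kap_def)
  have a1E: "2 * E / r21 < a1" using a1_big by (simp add: E_def)
  have a2E: "2 * E / r22 < a2" using a2_big by (simp add: E_def)
  have p21: "2 * E / r21 > 0" using rpos Epos by simp
  have p22: "2 * E / r22 > 0" using rpos Epos by simp
  have Q1: "Q1 > 0" "Q1 < a1" "2 * E / r21 < Q1" using a1E p21 by (auto simp: Q1_def)
  have Q2: "Q2 > 0" "Q2 < a2" "2 * E / r22 < Q2" using a2E p22 by (auto simp: Q2_def)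
  define c1 where "c1 n = (real n powr (-(r1/2))) powr R1" for n :: nat
  define c2 where "c2 n = exp (-(1 / (4 * a0) * real n powr (r1/2)))" for n :: nat
  define c3 where "c3 n = (real n powr (r21/2)) powr (-Q1)" for n :: nat
  define c4 where "c4 n = (real n powr (-(r21/2))) powr R4" for n :: nat
  define c5 where "c5 n = (real n powr (-(r22/2))) powr R5" for n :: nat
  define c6 where "c6 n = (real n powr (r22/2)) powr (-Q2)" for n :: nat
  define c7 where "c7 n = (real n powr (-r31)) powr R7" for n :: nat
  define c8 where "c8 n = exp (-(kap * real n powr r32))" for n :: nat
  define A1 where "A1 n = {x. P x \<and> fst x < real n powr (-(r1/2))}" for n :: nat
  define A2 where "A2 n = {x. P x \<and> real n powr (r1/2) < (norm (snd (snd (snd x))))^2}" for n :: nat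
  define A3 where "A3 n = {x. P x \<and> real n powr (r21/2) < fst x}" for n :: nat
  define A4 where "A4 n = {x. P x \<and> fst (snd (snd x)) < real n powr (-(r21/2))}" for n :: nat
  define A5 where "A5 n = {x. P x \<and> fst x < real n powr (-(r22/2))}" for n :: nat
  define A6 where "A6 n = {x. P x \<and> real n powr (r22/2) < fst (snd (snd x))}" for n :: nat
  define A7 where "A7 n = {x. P x \<and> fst (snd x) < real n powr (-r31)}" for n :: nat
  define A8 where "A8 n = {x. P x \<and> real n powr r32 < fst (snd x)}" for n :: nat
  define Z where "Z = {x. \<not> P x}"
  have mZ: "Z \<in> sets M" unfolding setsM Z_def by (rule pred_borel_set) measurable
  have m1: "A1 n \<in> sets M" for n unfolding setsM A1_def P_def by (rule pred_borel_set, simp only: borel_prod[symmetric]) measurable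
  have m2: "A2 n \<in> sets M" for n unfolding setsM A2_def P_def by (rule pred_borel_set, simp only: borel_prod[symmetric]) measurable
  have m3: "A3 n \<in> sets M" for n unfolding setsM A3_def P_def by (rule pred_borel_set, simp only: borel_prod[symmetric]) measurable
  have m4: "A4 n \<in> sets M" for n unfolding setsM A4_def P_def by (rule pred_borel_set, simp only: borel_prod[symmetric]) measurable
  have m5: "A5 n \<in> sets M" for n unfolding setsM A5_def P_def by (rule pred_borel_set, simp only: borel_prod[symmetric]) measurable
  have m6: "A6 n \<in> sets M" for n unfolding setsM A6_def P_def by (rule pred_borel_set, simp only: borel_prod[symmetric]) measurable
  have m7: "A7 n \<in> sets M" for n unfolding setsM A7_def P_def by (rule pred_borel_set, simp only: borel_prod[symmetric]) measurable
  have m8: "A8 n \<in> sets M" for n unfolding setsM A8_def P_def by (rule pred_borel_set, simp only: borel_prod[symmetric]) measurable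
  have bZ: "emeasure M Z \<le> 0"
    unfolding M_def Z_def P_def using zero_set[OF hyp] by simp

  have npos: "real n > 0" if "n \<ge> 1" for n :: nat using that by simp
  define I1 where "I1 = (\<integral>\<^sup>+x. ennreal (1 * ig_density a1 b1 x) \<partial>lborel)"
  define I2 where "I2 = (\<integral>\<^sup>+x. ennreal (1 * igauss_density mu lam x) \<partial>lborel)"
  define I3 where "I3 = (\<integral>\<^sup>+x. ennreal (1 * ig_density a2 b2 x) \<partial>lborel)"
  define I4 where "I4 = (\<integral>\<^sup>+x. ennreal (1 * nprod a0 (x :: real^'p)) \<partial>lborel)"
  have fI1: "I1 < \<infinity>" unfolding I1_def using hyp by (intro fin_ig1) auto
  have fI2: "I2 < \<infinity>" unfolding I2_def using hyp by (intro fin_igauss1) auto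
  have fI3: "I3 < \<infinity>" unfolding I3_def using hyp by (intro fin_ig1) auto
  have fI4: "I4 < \<infinity>" unfolding I4_def using hyp by (intro fin_nprod1) auto

  define K1 where "K1 = (\<integral>\<^sup>+x. ennreal (x powr (-R1) * ig_density a1 b1 x) \<partial>lborel) * I2 * I3 * I4"
  have b1: "emeasure M (A1 n) \<le> ennreal (c1 n) * K1" if "n \<ge> 1" for n
    unfolding K1_def I2_def I3_def I4_def M_def
  proof (rule term_bound[where hx="\<lambda>t. t powr (-R1)" and hy="\<lambda>_. 1" and hz="\<lambda>_. 1" and hw="\<lambda>_. 1"])
    fix x assume x: "x \<in> A1 n"
    then have "0 < fst x" "fst x < real n powr (-(r1/2))" by (auto simp: A1_def P_def)
    from low_bound[OF this R1] show "1 \<le> c1 n * (fst x powr (-R1) * 1 * 1 * 1)" by (simp add: c1_def)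
  qed (use hyp m1[of n] setsM in \<open>auto simp: c1_def\<close>)
  have f1: "K1 < \<infinity>" unfolding K1_def using fI2 fI3 fI4 hyp R1 by (intro prod4_fin fin_ig) auto
  have e1: "eventually (\<lambda>n. ennreal (c1 n) * K1 \<le> ennreal (real n powr (-E) / 8)) sequentially"
  proof (rule small_term[OF f1])
    show "((\<lambda>n. c1 n * real n powr E) \<longlongrightarrow> 0) sequentially" unfolding c1_def
      by (rule pow_lim) (use rpos in \<open>simp add: R1_def field_simps\<close>)
  qed (simp add: c1_def)

  define K2 where "K2 = I1 * I2 * I3 * (\<integral>\<^sup>+x. ennreal ((\<Prod>i\<in>UNIV. exp (1 / (4 * a0) * (x $ i)^2)) * nprod a0 (x :: real^'p)) \<partial>lborel)"
  have b2: "emeasure M (A2 n) \<le> ennreal (c2 n) * K2" if "n \<ge> 1" for n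
    unfolding K2_def I1_def I2_def I3_def M_def
  proof (rule term_bound[where hx="\<lambda>_. 1" and hy="\<lambda>_. 1" and hz="\<lambda>_. 1" and hw="\<lambda>b. \<Prod>i\<in>UNIV. exp (1 / (4 * a0) * (b $ i)^2)"])
    fix x assume x: "x \<in> A2 n"
    then have lt: "real n powr (r1/2) < (norm (snd (snd (snd x))))^2" by (auto simp: A2_def)
    have c0: "1 / (4 * a0) \<ge> 0" using hyp by simp
    have "exp (1 / (4 * a0) * (norm (snd (snd (snd x))))^2) = (\<Prod>i\<in>UNIV. exp (1 / (4 * a0) * (snd (snd (snd x)) $ i)^2))"
      by (simp add: norm_sq_vec sum_distrib_left exp_sum)
    then show "1 \<le> c2 n * (1 * 1 * 1 * (\<Prod>i\<in>UNIV. exp (1 / (4 * a0) * (snd (snd (snd x)) $ i)^2)))"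
      using exp_bound[OF lt c0] by (simp add: c2_def)
  qed (use hyp m2[of n] setsM in \<open>auto simp: c2_def intro!: prod_nonneg\<close>)
  have f2: "K2 < \<infinity>" unfolding K2_def using fI1 fI2 fI3 hyp by (intro prod4_fin fin_nprod_exp) auto
  have e2: "eventually (\<lambda>n. ennreal (c2 n) * K2 \<le> ennreal (real n powr (-E) / 8)) sequentially"
  proof (rule small_term[OF f2])
    show "((\<lambda>n. c2 n * real n powr E) \<longlongrightarrow> 0) sequentially" unfolding c2_def
      by (rule exp_lim) (use rpos hyp in auto)
  qed (simp add: c2_def)

  define K3 where "K3 = (\<integral>\<^sup>+x. ennreal (x powr Q1 * ig_density a1 b1 x) \<partial>lborel) * I2 * I3 * I4"
  have b3: "emeasure M (A3 n) \<le> ennreal (c3 n) * K3" if "n \<ge> 1" for n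
    unfolding K3_def I2_def I3_def I4_def M_def
  proof (rule term_bound[where hx="\<lambda>t. t powr Q1" and hy="\<lambda>_. 1" and hz="\<lambda>_. 1" and hw="\<lambda>_. 1"])
    fix x assume x: "x \<in> A3 n"
    then have "0 < real n powr (r21/2)" "real n powr (r21/2) < fst x" using npos[OF that] by (auto simp: A3_def)
    from high_bound[OF this Q1(1)] show "1 \<le> c3 n * (fst x powr Q1 * 1 * 1 * 1)" by (simp add: c3_def)
  qed (use hyp m3[of n] setsM in \<open>auto simp: c3_def\<close>)
  have f3: "K3 < \<infinity>" unfolding K3_def using fI2 fI3 fI4 hyp Q1 by (intro prod4_fin fin_ig) auto
  have e3: "eventually (\<lambda>n. ennreal (c3 n) * K3 \<le> ennreal (real n powr (-E) / 8)) sequentially"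
  proof (rule small_term[OF f3])
    have "r21 / 2 * - Q1 + E < 0"
    proof -
      have "2 * E < r21 * Q1" using Q1(3) rpos by (simp add: divide_less_eq mult.commute)
      then show ?thesis by simp
    qed
    then show "((\<lambda>n. c3 n * real n powr E) \<longlongrightarrow> 0) sequentially" unfolding c3_def
      by (rule pow_lim)
  qed (simp add: c3_def)

  define K4 where "K4 = I1 * I2 * (\<integral>\<^sup>+x. ennreal (x powr (-R4) * ig_density a2 b2 x) \<partial>lborel) * I4"
  have b4: "emeasure M (A4 n) \<le> ennreal (c4 n) * K4" if "n \<ge> 1" for n
    unfolding K4_def I1_def I2_def I4_def M_def
  proof (rule term_bound[where hx="\<lambda>_. 1" and hy="\<lambda>_. 1" and hz="\<lambda>t. t powr (-R4)" and hw="\<lambda>_. 1"])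
    fix x assume x: "x \<in> A4 n"
    then have "0 < fst (snd (snd x))" "fst (snd (snd x)) < real n powr (-(r21/2))" by (auto simp: A4_def P_def)
    from low_bound[OF this R4] show "1 \<le> c4 n * (1 * 1 * fst (snd (snd x)) powr (-R4) * 1)" by (simp add: c4_def)
  qed (use hyp m4[of n] setsM in \<open>auto simp: c4_def\<close>)
  have f4: "K4 < \<infinity>" unfolding K4_def using fI1 fI2 fI4 hyp R4 by (intro prod4_fin fin_ig) auto
  have e4: "eventually (\<lambda>n. ennreal (c4 n) * K4 \<le> ennreal (real n powr (-E) / 8)) sequentially"
  proof (rule small_term[OF f4])
    show "((\<lambda>n. c4 n * real n powr E) \<longlongrightarrow> 0) sequentially" unfolding c4_def
      by (rule pow_lim) (use rpos in \<open>simp add: R4_def field_simps\<close>)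
  qed (simp add: c4_def)

  define K5 where "K5 = (\<integral>\<^sup>+x. ennreal (x powr (-R5) * ig_density a1 b1 x) \<partial>lborel) * I2 * I3 * I4"
  have b5: "emeasure M (A5 n) \<le> ennreal (c5 n) * K5" if "n \<ge> 1" for n
    unfolding K5_def I2_def I3_def I4_def M_def
  proof (rule term_bound[where hx="\<lambda>t. t powr (-R5)" and hy="\<lambda>_. 1" and hz="\<lambda>_. 1" and hw="\<lambda>_. 1"])
    fix x assume x: "x \<in> A5 n"
    then have "0 < fst x" "fst x < real n powr (-(r22/2))" by (auto simp: A5_def P_def)
    from low_bound[OF this R5] show "1 \<le> c5 n * (fst x powr (-R5) * 1 * 1 * 1)" by (simp add: c5_def)
  qed (use hyp m5[of n] setsM in \<open>auto simp: c5_def\<close>)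
  have f5: "K5 < \<infinity>" unfolding K5_def using fI2 fI3 fI4 hyp R5 by (intro prod4_fin fin_ig) auto
  have e5: "eventually (\<lambda>n. ennreal (c5 n) * K5 \<le> ennreal (real n powr (-E) / 8)) sequentially"
  proof (rule small_term[OF f5])
    show "((\<lambda>n. c5 n * real n powr E) \<longlongrightarrow> 0) sequentially" unfolding c5_def
      by (rule pow_lim) (use rpos in \<open>simp add: R5_def field_simps\<close>)
  qed (simp add: c5_def)

  define K6 where "K6 = I1 * I2 * (\<integral>\<^sup>+x. ennreal (x powr Q2 * ig_density a2 b2 x) \<partial>lborel) * I4"
  have b6: "emeasure M (A6 n) \<le> ennreal (c6 n) * K6" if "n \<ge> 1" for n
    unfolding K6_def I1_def I2_def I4_def M_def
  proof (rule term_bound[where hx="\<lambda>_. 1" and hy="\<lambda>_. 1" and hz="\<lambda>t. t powr Q2" and hw="\<lambda>_. 1"])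
    fix x assume x: "x \<in> A6 n"
    then have "0 < real n powr (r22/2)" "real n powr (r22/2) < fst (snd (snd x))" using npos[OF that] by (auto simp: A6_def)
    from high_bound[OF this Q2(1)] show "1 \<le> c6 n * (1 * 1 * fst (snd (snd x)) powr Q2 * 1)" by (simp add: c6_def)
  qed (use hyp m6[of n] setsM in \<open>auto simp: c6_def\<close>)
  have f6: "K6 < \<infinity>" unfolding K6_def using fI1 fI2 fI4 hyp Q2 by (intro prod4_fin fin_ig) auto
  have e6: "eventually (\<lambda>n. ennreal (c6 n) * K6 \<le> ennreal (real n powr (-E) / 8)) sequentially"
  proof (rule small_term[OF f6])
    have "r22 / 2 * - Q2 + E < 0"
    proof -
      have "2 * E < r22 * Q2" using Q2(3) rpos by (simp add: divide_less_eq mult.commute)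
      then show ?thesis by simp
    qed
    then show "((\<lambda>n. c6 n * real n powr E) \<longlongrightarrow> 0) sequentially" unfolding c6_def
      by (rule pow_lim)
  qed (simp add: c6_def)

  define K7 where "K7 = I1 * (\<integral>\<^sup>+x. ennreal (x powr (-R7) * igauss_density mu lam x) \<partial>lborel) * I3 * I4"
  have b7: "emeasure M (A7 n) \<le> ennreal (c7 n) * K7" if "n \<ge> 1" for n
    unfolding K7_def I1_def I3_def I4_def M_def
  proof (rule term_bound[where hx="\<lambda>_. 1" and hy="\<lambda>t. t powr (-R7)" and hz="\<lambda>_. 1" and hw="\<lambda>_. 1"])
    fix x assume x: "x \<in> A7 n"
    then have "0 < fst (snd x)" "fst (snd x) < real n powr (-r31)" by (auto simp: A7_def P_def)
    from low_bound[OF this R7] show "1 \<le> c7 n * (1 * fst (snd x) powr (-R7) * 1 * 1)" by (simp add: c7_def)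
  qed (use hyp m7[of n] setsM in \<open>auto simp: c7_def\<close>)
  have f7: "K7 < \<infinity>" unfolding K7_def using fI1 fI3 fI4 hyp R7 by (intro prod4_fin igauss_negmoment_finite) auto
  have e7: "eventually (\<lambda>n. ennreal (c7 n) * K7 \<le> ennreal (real n powr (-E) / 8)) sequentially"
  proof (rule small_term[OF f7])
    show "((\<lambda>n. c7 n * real n powr E) \<longlongrightarrow> 0) sequentially" unfolding c7_def
      by (rule pow_lim) (use rpos in \<open>simp add: R7_def field_simps\<close>)
  qed (simp add: c7_def)

  define K8 where "K8 = I1 * (\<integral>\<^sup>+x. ennreal (exp (kap * x) * igauss_density mu lam x) \<partial>lborel) * I3 * I4"
  have b8: "emeasure M (A8 n) \<le> ennreal (c8 n) * K8" if "n \<ge> 1" for n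
    unfolding K8_def I1_def I3_def I4_def M_def
  proof (rule term_bound[where hx="\<lambda>_. 1" and hy="\<lambda>t. exp (kap * t)" and hz="\<lambda>_. 1" and hw="\<lambda>_. 1"])
    fix x assume x: "x \<in> A8 n"
    then have lt: "real n powr r32 < fst (snd x)" by (auto simp: A8_def)
    from exp_bound[OF lt] kap show "1 \<le> c8 n * (1 * exp (kap * fst (snd x)) * 1 * 1)" by (simp add: c8_def)
  qed (use hyp m8[of n] setsM in \<open>auto simp: c8_def\<close>)
  have f8: "K8 < \<infinity>" unfolding K8_def kap_def using fI1 fI3 fI4 hyp by (intro prod4_fin igauss_expmoment_finite) auto
  have e8: "eventually (\<lambda>n. ennreal (c8 n) * K8 \<le> ennreal (real n powr (-E) / 8)) sequentially"
  proof (rule small_term[OF f8])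
    show "((\<lambda>n. c8 n * real n powr E) \<longlongrightarrow> 0) sequentially" unfolding c8_def
      by (rule exp_lim) (use rpos kap in auto)
  qed (simp add: c8_def)

  have cover: "UNIV - (sieve_E r1 r21 r22 r31 r32 n :: 'p param set) \<subseteq> Z \<union> (A1 n \<union> (A2 n \<union> (A3 n \<union> (A4 n \<union> (A5 n \<union> (A6 n \<union> (A7 n \<union> A8 n)))))))"
    if n1: "n \<ge> 1" for n
  proof
    fix x assume x: "x \<in> UNIV - (sieve_E r1 r21 r22 r31 r32 n :: 'p param set)"
    show "x \<in> Z \<union> (A1 n \<union> (A2 n \<union> (A3 n \<union> (A4 n \<union> (A5 n \<union> (A6 n \<union> (A7 n \<union> A8 n)))))))"
    proof (cases "P x")
      case False then show ?thesis by (simp add: Z_def)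
    next
      case True
      then have pos: "fst x > 0" "fst (snd x) > 0" "fst (snd (snd x)) > 0" by (auto simp: P_def)
      have nots: "\<not> ((norm (snd (snd (snd x))))^2 / fst x \<le> real n powr r1 \<and>
          real n powr (- r21) \<le> fst (snd (snd x)) / fst x \<and> fst (snd (snd x)) / fst x \<le> real n powr r22 \<and>
          real n powr (- r31) \<le> fst (snd x) \<and> fst (snd x) \<le> real n powr r32)"
        using x pos by (simp add: sieve_mem)
      have "fst x < real n powr (-(r1/2)) \<or> real n powr (r1/2) < (norm (snd (snd (snd x))))^2 \<or> real n powr (r21/2) < fst x \<or>
         fst (snd (snd x)) < real n powr (-(r21/2)) \<or>
         fst x < real n powr (-(r22/2)) \<or> real n powr (r22/2) < fst (snd (snd x)) \<or> fst (snd x) < real n powr (-r31) \<or>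
         real n powr r32 < fst (snd x)"
        by (rule cover_real[OF npos[OF n1] pos(1) pos(3) _ nots]) simp
      then show ?thesis using True
        by (auto simp: A1_def A2_def A3_def A4_def A5_def A6_def A7_def A8_def)
    qed
  qed
  show ?thesis
    using e1 e2 e3 e4 e5 e6 e7 e8 eventually_ge_at_top[of 1]
  proof eventually_elim
    case (elim n)
    have n1: "n \<ge> 1" using elim by simp
    note s8 = sub_step[OF m7 m8 b7[OF n1] b8[OF n1]]
    note u8 = sets.Un[OF m7 m8]
    note s7 = sub_step[OF m6 u8 b6[OF n1] s8]
    note u7 = sets.Un[OF m6 u8]
    note s6 = sub_step[OF m5 u7 b5[OF n1] s7]
    note u6 = sets.Un[OF m5 u7]
    note s5 = sub_step[OF m4 u6 b4[OF n1] s6]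
    note u5 = sets.Un[OF m4 u6]
    note s4 = sub_step[OF m3 u5 b3[OF n1] s5]
    note u4 = sets.Un[OF m3 u5]
    note s3 = sub_step[OF m2 u4 b2[OF n1] s4]
    note u3 = sets.Un[OF m2 u4]
    note s2 = sub_step[OF m1 u3 b1[OF n1] s3]
    note u2 = sets.Un[OF m1 u3]
    note s1 = sub_step[OF mZ u2 bZ s2]
    note u1 = sets.Un[OF mZ u2]
    have "emeasure M (UNIV - (sieve_E r1 r21 r22 r31 r32 n :: 'p param set)) \<le> emeasure M (Z \<union> (A1 n \<union> (A2 n \<union> (A3 n \<union> (A4 n \<union> (A5 n \<union> (A6 n \<union> (A7 n \<union> A8 n))))))))"
      by (rule emeasure_mono[OF cover[OF n1] u1])
    also note s1
    also have "0 + (ennreal (c1 n) * K1 + (ennreal (c2 n) * K2 + (ennreal (c3 n) * K3 + (ennreal (c4 n) * K4 +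
        (ennreal (c5 n) * K5 + (ennreal (c6 n) * K6 + (ennreal (c7 n) * K7 + ennreal (c8 n) * K8)))))))
      \<le> 0 + (ennreal (real n powr (-E) / 8) + (ennreal (real n powr (-E) / 8) + (ennreal (real n powr (-E) / 8) + (ennreal (real n powr (-E) / 8) +
        (ennreal (real n powr (-E) / 8) + (ennreal (real n powr (-E) / 8) + (ennreal (real n powr (-E) / 8) + ennreal (real n powr (-E) / 8))))))))"
      using elim by (intro add_mono order_refl) auto
    also have "\<dots> = ennreal (real n powr (-E))" by (rule eight) simp
    finally show ?case by (simp add: M_def E_def)
  qed
qed

theorem proposition2:
  fixes d :: nat and \<nu> \<rho>1 \<rho>21 \<rho>22 \<rho>31 \<rho>32 :: real
    and a0 a1 b1 a2 b2 \<mu> lam :: real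
    and dummy :: "'p::finite itself"
  assumes d_pos: "d > 0" and nu_pos: "\<nu> > 0"
    and rho: "\<exists>\<gamma>. max (1 - real d / (4 * \<nu>)) 0 < \<gamma> \<and> \<gamma> < 1 \<and>
              0 < \<rho>1 \<and> \<rho>1 < 1 - \<gamma> \<and>
              0 < \<rho>21 \<and> \<rho>21 < 2 * \<nu> * (1 - \<gamma>) / real d \<and>
              0 < \<rho>22 \<and> \<rho>22 < 1/2 - 2 * (1 - \<gamma>) * \<nu> / real d \<and>
              0 < \<rho>31 \<and>
              0 < \<rho>32 \<and> \<rho>32 < (1 - \<gamma>) / real d"
    and hyp_pos: "a0 > 0" "a1 > 0" "b1 > 0" "a2 > 0" "b2 > 0" "\<mu> > 0" "lam > 0"
    and a1_big: "a1 > 2 * (3 * real CARD('p) + 6) / \<rho>21"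
    and a2_big: "a2 > 2 * (3 * real CARD('p) + 6) / \<rho>22"
  shows "(\<forall>(x0 :: 'p param). fst x0 > 0 \<and> fst (snd x0) > 0 \<and> fst (snd (snd x0)) > 0 \<longrightarrow>
            assumption_A3 (prior_density a0 a1 b1 a2 b2 \<mu> lam) x0) \<and>
         (\<forall>\<^sub>F n in sequentially.
            emeasure (density lborel (\<lambda>x. ennreal (prior_density a0 a1 b1 a2 b2 \<mu> lam x)))
              (UNIV - (sieve_E \<rho>1 \<rho>21 \<rho>22 \<rho>31 \<rho>32 n :: 'p param set))
            \<le> ennreal (real n powr (- (3 * real CARD('p) + 6))))"
proof -
  obtain \<gamma> where g: "max (1 - real d / (4 * \<nu>)) 0 < \<gamma>" "\<gamma> < 1"
      "0 < \<rho>1" "0 < \<rho>21" "0 < \<rho>22" "0 < \<rho>31" "0 < \<rho>32"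
    using rho by blast
  show ?thesis
  proof (intro conjI allI impI)
    fix x0 :: "'p param"
    assume "fst x0 > 0 \<and> fst (snd x0) > 0 \<and> fst (snd (snd x0)) > 0"
    then show "assumption_A3 (prior_density a0 a1 b1 a2 b2 \<mu> lam) x0"
      using A3[OF hyp_pos] by blast
  next
    show "\<forall>\<^sub>F n in sequentially.
            emeasure (density lborel (\<lambda>x. ennreal (prior_density a0 a1 b1 a2 b2 \<mu> lam x)))
              (UNIV - (sieve_E \<rho>1 \<rho>21 \<rho>22 \<rho>31 \<rho>32 n :: 'p param set))
            \<le> ennreal (real n powr (- (3 * real CARD('p) + 6)))"
      by (rule part2[OF g(3-7) hyp_pos a1_big a2_big])
  qed
qed

end
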